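(* Let $K\ge1$, let $(p_1,\dots,p_K)$ and $(q_1,\dots,q_K)$ be probability vectors, let $\Pi_1,\dots,\Pi_K$ be arbitrary probability distributions on $\mathcal{X}^1\times\mathcal{Y}$, and let $\alpha\in(0,1)$. Let $P$ be the distribution of $(X,Y)=(X^0,X^1,Y)$ given by $X^0\sim\textnormal{Multinomial}(p_1,\dots,p_K)$ and $(X^1,Y)\mid X^0=k\sim\Pi_k$, and let $Q$ be defined in the same way with $q_1,\dots,q_K$ in place of $p_1,\dots,p_K$. Suppose $(X_1,Y_1),\dots,(X_n,Y_n)$ are i.i.d. from $P$ and $(X_{n+1},Y_{n+1})$ is drawn from $Q$ independently of them. Let $s:\mathcal{X}\times\mathcal{Y}\to\mathbb{R}$ be any fixed measurable score function and let $\widehat{C}_n$ be the GWCP prediction set defined in the context, with $n_k=\sum_{i\le n}\mathbf{1}\{X_i^0=k\}$. Then \[\mathbb{P}\left\{Y_{n+1}\in\widehat{C}_n(X_{n+1})\right\}\ \ge\ 1-\alpha-\mathbb{E}\left[\max_{k:\,n_k>0}\{q_k/n_k\}\right].\] In particular, if $\min_k p_k\ge\frac{8\log n}{n}$, then \[\mathbb{P}\left\{Y_{n+1}\in\widehat{C}_n(X_{n+1})\right\}\ \ge\ 1-\alpha-4n^{-1}\max_k\{q_k/p_k\}.\]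
   Context: Features are $x=(x^0,x^1)\in\mathcal{X}=[K]\times\mathcal{X}^1$, where $x^0\in[K]=\{1,\dots,K\}$ is the group label. For a probability distribution $\mu$ on $\mathbb{R}\cup\{+\infty\}$ and $\tau\in(0,1]$, $\textnormal{Quantile}_{\tau}(\mu)=\inf\{t\in\mathbb{R}\cup\{+\infty\}:\mu([-\infty,t])\ge\tau\}$; $\delta_s$ denotes the point mass at $s$. Given calibration data, set $s_i=s(X_i,Y_i)$, $n_k=\sum_{i\le n}\mathbf{1}\{X_i^0=k\}$, and $\widehat{P}^{(k)}_{\textnormal{score}}=\frac{1}{n_k}\sum_{i\le n:\,X_i^0=k}\delta_{s_i}$ if $n_k>0$, while $\widehat{P}^{(k)}_{\textnormal{score}}=\delta_{+\infty}$ if $n_k=0$. The GWCP prediction set is $\widehat{C}_n(x)=\{y\in\mathcal{Y}: s(x,y)\le\widehat{q}\}$ with $\widehat{q}=\textnormal{Quantile}_{1-\alpha}\big(\sum_{k=1}^K q_k\widehat{P}^{(k)}_{\textnormal{score}}\big)$. *)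

theory Defs
  imports "HOL-Probability.Probability"
begin

definition grp_count :: "nat \<Rightarrow> (nat \<Rightarrow> nat) \<Rightarrow> nat \<Rightarrow> nat" where
  "grp_count n g k = card {i \<in> {1..n}. g i = k}"

text \<open>The (finitely supported) probability distribution
  sum_k q_k Phat^(k)_score on the extended reals, given as a set function:
  Phat^(k) is the empirical distribution of the scores in group k, or the
  point mass at +infinity if group k is empty.\<close>
definition gwcp_mixture ::
  "nat \<Rightarrow> (nat \<Rightarrow> real) \<Rightarrow> nat \<Rightarrow> (nat \<Rightarrow> nat) \<Rightarrow> (nat \<Rightarrow> real) \<Rightarrow> ereal set \<Rightarrow> real" where
  "gwcp_mixture K q n g sc A =
     (\<Sum>k\<in>{1..K}. q k *
        (if grp_count n g k > 0
         then real (card {i \<in> {1..n}. g i = k \<and> ereal (sc i) \<in> A}) / real (grp_count n g k)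
         else (if \<infinity> \<in> A then 1 else 0)))"

definition quantile :: "real \<Rightarrow> (ereal set \<Rightarrow> real) \<Rightarrow> ereal" where
  "quantile \<tau> \<mu> = Inf {t. t \<noteq> -\<infinity> \<and> \<mu> {..t} \<ge> \<tau>}"

text \<open>GWCP threshold and prediction set; D i = ((X_i^0, X_i^1), Y_i) are the calibration data.\<close>
definition gwcp_qhat ::
  "((nat \<times> 'x) \<times> 'y \<Rightarrow> real) \<Rightarrow> nat \<Rightarrow> (nat \<Rightarrow> real) \<Rightarrow> real \<Rightarrow> nat \<Rightarrow> (nat \<Rightarrow> (nat \<times> 'x) \<times> 'y) \<Rightarrow> ereal" where
  "gwcp_qhat s K q \<alpha> n D =
     quantile (1 - \<alpha>) (gwcp_mixture K q n (\<lambda>i. fst (fst (D i))) (\<lambda>i. s (D i)))"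

definition gwcp_set ::
  "((nat \<times> 'x) \<times> 'y \<Rightarrow> real) \<Rightarrow> nat \<Rightarrow> (nat \<Rightarrow> real) \<Rightarrow> real \<Rightarrow> nat \<Rightarrow> (nat \<Rightarrow> (nat \<times> 'x) \<times> 'y)
    \<Rightarrow> nat \<times> 'x \<Rightarrow> 'y set" where
  "gwcp_set s K q \<alpha> n D x = {y. ereal (s (x, y)) \<le> gwcp_qhat s K q \<alpha> n D}"

end

theory Submission
  imports Defs
begin



definition sw :: "'i \<Rightarrow> 'i \<Rightarrow> 'i \<Rightarrow> 'i" where
  "sw j m i = (if i = j then m else if i = m then j else i)"

lemma sw_sw[simp]: "sw j m (sw j m i) = i"
  by (simp add: sw_def)

lemma sw_in: "j \<in> I \<Longrightarrow> m \<in> I \<Longrightarrow> i \<in> I \<Longrightarrow> sw j m i \<in> I"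
  by (simp add: sw_def)

lemma swap_PiM:
  fixes D :: "'i \<Rightarrow> 'a measure"
  assumes I: "finite I" and D: "\<And>i. prob_space (D i)" and DL: "\<And>i. sets (D i) = sets L"
  and jm: "j \<in> I" "m \<in> I" "j \<noteq> m"
  and Bs: "\<And>i. i \<in> I \<Longrightarrow> Bs i \<in> sets L" "Bs j = Bs m"
  and prp: "\<And>A A'. A \<in> sets L \<Longrightarrow> A' \<in> sets L \<Longrightarrow>
     emeasure (D j) (A \<inter> Bs j) * emeasure (D m) (A' \<inter> Bs j) = emeasure (D j) (A' \<inter> Bs j) * emeasure (D m) (A \<inter> Bs j)"
  and E: "E \<in> sets (PiM I D)"
  shows "emeasure (PiM I D) ((\<lambda>z. \<lambda>i\<in>I. z (sw j m i)) -` E \<inter> space (PiM I D) \<inter> PiE I Bs)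
       = emeasure (PiM I D) (E \<inter> PiE I Bs)"
proof -
  interpret product_prob_space D using D by (simp add: product_prob_space_def product_prob_space_axioms_def product_sigma_finite_def prob_space_imp_sigma_finite)
  let ?\<mu> = "PiM I D"
  let ?C = "PiE I Bs"
  let ?f = "\<lambda>z. \<lambda>i\<in>I. z (sw j m i)"
  have spD: "space (D i) = space L" for i using DL by (metis sets_eq_imp_space_eq)
  have C: "?C \<in> sets ?\<mu>" using Bs DL by (auto intro!: sets_PiM_I_finite I)
  have f: "?f \<in> measurable ?\<mu> ?\<mu>"
  proof (rule measurable_restrict)
    fix i assume "i \<in> I"
    have "(\<lambda>z. z (sw j m i)) \<in> measurable ?\<mu> (D (sw j m i))"
      using sw_in[OF jm(1,2) \<open>i\<in>I\<close>] by (rule measurable_component_singleton)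
    then show "(\<lambda>z. z (sw j m i)) \<in> measurable ?\<mu> (D i)"
      using DL by (metis measurable_cong_sets)
  qed
  define N1 where "N1 = density ?\<mu> (indicator ?C)"
  define N2 where "N2 = distr N1 ?\<mu> ?f"
  have sN1: "sets N1 = sets ?\<mu>" by (simp add: N1_def)
  have eq: "N1 = N2"
  proof (rule measure_eqI_PiM_finite[OF I, where M=D])
    show "sets N1 = sets ?\<mu>" by (rule sN1)
    show "sets N2 = sets ?\<mu>" by (simp add: N2_def)
    fix A assume A: "\<And>i. i \<in> I \<Longrightarrow> A i \<in> sets (D i)"
    have A': "A i \<subseteq> space L" if "i \<in> I" for i using A[OF that] spD sets.sets_into_space by metis
    have r1: "emeasure N1 (PiE I A) = (\<Prod>i\<in>I. emeasure (D i) (Bs i \<inter> A i))"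
    proof -
      have "emeasure N1 (PiE I A) = emeasure ?\<mu> (PiE I (\<lambda>i. Bs i \<inter> A i))"
        unfolding N1_def using A C
        by (simp add: emeasure_restricted sets_PiM_I_finite I PiE_Int)
      also have "\<dots> = (\<Prod>i\<in>I. emeasure (D i) (Bs i \<inter> A i))"
        using A Bs DL by (subst emeasure_PiM) (auto simp: I)
      finally show ?thesis .
    qed
    have pre: "?f -` PiE I A \<inter> space ?\<mu> = PiE I (\<lambda>i. A (sw j m i))"
    proof (intro equalityI subsetI)
      fix z assume "z \<in> ?f -` PiE I A \<inter> space ?\<mu>"
      then have z: "z \<in> space ?\<mu>" "?f z \<in> PiE I A" by auto
      show "z \<in> PiE I (\<lambda>i. A (sw j m i))"
      proof (rule PiE_I)
        fix i assume i: "i \<in> I"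
        have "?f z (sw j m i) \<in> A (sw j m i)" using z(2) sw_in[OF jm(1,2) i] by (auto simp: PiE_iff)
        then show "z i \<in> A (sw j m i)" using sw_in[OF jm(1,2) i] by simp
      next
        fix i assume "i \<notin> I" then show "z i = undefined" using z(1) by (auto simp: space_PiM PiE_iff extensional_def)
      qed
    next
      fix z assume z: "z \<in> PiE I (\<lambda>i. A (sw j m i))"
      have "?f z \<in> PiE I A"
        using z sw_in[OF jm(1,2)] by (auto simp: PiE_iff) (metis sw_sw)
      moreover have "z \<in> space ?\<mu>"
        using z sw_in[OF jm(1,2)] A' spD by (auto simp: PiE_iff space_PiM) blast
      ultimately show "z \<in> ?f -` PiE I A \<inter> space ?\<mu>" by simp
    qed
    have r2: "emeasure N2 (PiE I A) = (\<Prod>i\<in>I. emeasure (D i) (Bs i \<inter> A (sw j m i)))"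
    proof -
      have AP: "PiE I A \<in> sets ?\<mu>" using A by (auto intro!: sets_PiM_I_finite I)
      have As: "A (sw j m i) \<in> sets (D i)" if "i \<in> I" for i using A[OF sw_in[OF jm(1,2) that]] DL by simp
      have "emeasure N2 (PiE I A) = emeasure N1 (?f -` PiE I A \<inter> space ?\<mu>)"
        unfolding N2_def using AP f by (simp add: emeasure_distr N1_def)
      also have "\<dots> = emeasure ?\<mu> (PiE I (\<lambda>i. Bs i \<inter> A (sw j m i)))"
        unfolding N1_def pre using As C
        by (simp add: emeasure_restricted sets_PiM_I_finite I PiE_Int)
      also have "\<dots> = (\<Prod>i\<in>I. emeasure (D i) (Bs i \<inter> A (sw j m i)))"
        using As Bs DL by (subst emeasure_PiM) (auto simp: I)
      finally show ?thesis .
    qed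
    have "(\<Prod>i\<in>I. emeasure (D i) (Bs i \<inter> A (sw j m i))) = (\<Prod>i\<in>I. emeasure (D i) (Bs i \<inter> A i))"
    proof -
      define I' where "I' = I - {j, m}"
      have II: "I = insert j (insert m I')" "j \<notin> insert m I'" "m \<notin> I'" "finite I'"
        using jm I by (auto simp: I'_def)
      have e1: "(\<Prod>i\<in>I'. emeasure (D i) (Bs i \<inter> A (sw j m i))) = (\<Prod>i\<in>I'. emeasure (D i) (Bs i \<inter> A i))"
        by (rule prod.cong) (auto simp: I'_def sw_def)
      have AjAm: "A j \<in> sets L" "A m \<in> sets L" using A jm DL by auto
      have e2: "emeasure (D j) (Bs j \<inter> A m) * emeasure (D m) (Bs m \<inter> A j)
             = emeasure (D j) (Bs j \<inter> A j) * emeasure (D m) (Bs m \<inter> A m)"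
        using prp[OF AjAm] Bs(2) by (simp add: Int_commute mult.commute)
      show ?thesis unfolding II(1) using II(2-4) e1 e2 jm(3)
        by (simp add: sw_def flip: mult.assoc)
    qed
    then show "emeasure N1 (PiE I A) = emeasure N2 (PiE I A)" using r1 r2 by simp
  next
    show "range (\<lambda>_. space ?\<mu>) \<subseteq> prod_algebra I D"
      by (auto simp: space_PiM intro: space_in_prod_algebra)
    show "(\<Union>i::nat. space ?\<mu>) = space ?\<mu>" by simp
    show "emeasure N1 (space ?\<mu>) \<noteq> \<infinity>" 
      unfolding N1_def using C by (simp add: emeasure_restricted)
  qed
  have pE: "?f -` E \<inter> space ?\<mu> \<in> sets ?\<mu>" using f E by (rule measurable_sets)
  have fN: "?f \<in> measurable N1 ?\<mu>" using f sN1 by (simp add: N1_def)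
  have "emeasure ?\<mu> (?f -` E \<inter> space ?\<mu> \<inter> ?C) = emeasure N1 (?f -` E \<inter> space ?\<mu>)"
    unfolding N1_def using C pE by (simp add: emeasure_restricted Int_commute)
  also have "\<dots> = emeasure N1 (?f -` E \<inter> space N1)" by (simp add: N1_def)
  also have "\<dots> = emeasure N2 E" unfolding N2_def using fN E by (simp add: emeasure_distr)
  also have "\<dots> = emeasure N1 E" using eq by simp
  also have "\<dots> = emeasure ?\<mu> (E \<inter> ?C)"
    unfolding N1_def using C E by (simp add: emeasure_restricted Int_commute)
  finally show ?thesis .
qed



definition wgt :: "(nat \<Rightarrow> real) \<Rightarrow> nat \<Rightarrow> (nat \<Rightarrow> nat) \<Rightarrow> nat \<Rightarrow> real" where
  "wgt q n h i = q (h i) / real (grp_count n h (h i))"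

definition Fs :: "(nat \<Rightarrow> real) \<Rightarrow> nat \<Rightarrow> (nat \<Rightarrow> nat) \<Rightarrow> (nat \<Rightarrow> real) \<Rightarrow> real \<Rightarrow> real" where
  "Fs q n h sc x = (\<Sum>i\<in>{1..n}. if sc i < x then wgt q n h i else 0)"

lemma card_as_sum: "finite A \<Longrightarrow> real (card {i\<in>A. P i}) = (\<Sum>i\<in>A. if P i then 1 else 0)"
  by (simp add: sum.If_cases Int_def)

lemma mix_lt:
  assumes h: "\<forall>i\<in>{1..n}. h i \<in> {1..K}"
  shows "gwcp_mixture K q n h sc {y. y < ereal x} = Fs q n h sc x"
proof -
  have "gwcp_mixture K q n h sc {y. y < ereal x}
      = (\<Sum>k\<in>{1..K}. \<Sum>i\<in>{1..n}. if h i = k \<and> sc i < x then q k / real (grp_count n h k) else 0)"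
    unfolding gwcp_mixture_def
  proof (rule sum.cong[OF refl])
    fix k assume k: "k \<in> {1..K}"
    show "q k * (if 0 < grp_count n h k
          then real (card {i \<in> {1..n}. h i = k \<and> ereal (sc i) \<in> {y. y < ereal x}}) / real (grp_count n h k)
          else if \<infinity> \<in> {y. y < ereal x} then 1 else 0) =
        (\<Sum>i\<in>{1..n}. if h i = k \<and> sc i < x then q k / real (grp_count n h k) else 0)"
    proof (cases "grp_count n h k > 0")
      case True
      have "real (card {i \<in> {1..n}. h i = k \<and> ereal (sc i) \<in> {y. y < ereal x}})
          = (\<Sum>i\<in>{1..n}. if h i = k \<and> sc i < x then 1 else 0)"
        by (subst card_as_sum) auto
      have "q k * (real (card {i \<in> {1..n}. h i = k \<and> ereal (sc i) \<in> {y. y < ereal x}}) / real (grp_count n h k))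
         = (\<Sum>i\<in>{1..n}. q k * (if h i = k \<and> sc i < x then 1 else 0) / real (grp_count n h k))"
        unfolding \<open>real (card _) = _\<close> by (simp add: sum_distrib_left sum_divide_distrib)
      also have "\<dots> = (\<Sum>i\<in>{1..n}. if h i = k \<and> sc i < x then q k / real (grp_count n h k) else 0)"
        by (rule sum.cong) auto
      finally show ?thesis using True by simp
    next
      case False
      then have "{i \<in> {1..n}. h i = k} = {}" unfolding grp_count_def by (simp add: card_eq_0_iff)
      then have hk: "\<forall>i\<in>{1..n}. h i \<noteq> k" by auto
      have z: "(\<Sum>i\<in>{1..n}. if h i = k \<and> sc i < x then q k / real (grp_count n h k) else 0) = 0"
        by (rule sum.neutral) (use hk in auto)
      show ?thesis unfolding z using False by simp
    qed
  qed
  also have "\<dots> = (\<Sum>i\<in>{1..n}. \<Sum>k\<in>{1..K}. if h i = k \<and> sc i < x then q k / real (grp_count n h k) else 0)"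
    by (rule sum.swap)
  also have "\<dots> = Fs q n h sc x"
    unfolding Fs_def wgt_def
  proof (rule sum.cong[OF refl])
    fix i assume "i \<in> {1..n}"
    then have "h i \<in> {1..K}" using h by auto
    then show "(\<Sum>k\<in>{1..K}. if h i = k \<and> sc i < x then q k / real (grp_count n h k) else 0) =
        (if sc i < x then q (h i) / real (grp_count n h (h i)) else 0)"
      by (cases "sc i < x") (simp_all add: sum.delta')
  qed
  finally show ?thesis .
qed

lemma mix_cong:
  assumes "\<infinity> \<in> A \<longleftrightarrow> \<infinity> \<in> B" "\<forall>i\<in>{1..n}. ereal (sc i) \<in> A \<longleftrightarrow> ereal (sc i) \<in> B"
  shows "gwcp_mixture K q n h sc A = gwcp_mixture K q n h sc B"
proof -
  have "{i \<in> {1..n}. h i = k \<and> ereal (sc i) \<in> A} = {i \<in> {1..n}. h i = k \<and> ereal (sc i) \<in> B}" for k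
    using assms(2) by auto
  then show ?thesis unfolding gwcp_mixture_def by (simp only: assms(1))
qed

lemma mix_mono:
  assumes "A \<subseteq> B" "\<forall>k\<in>{1..K}. q k \<ge> 0"
  shows "gwcp_mixture K q n h sc A \<le> gwcp_mixture K q n h sc B"
  unfolding gwcp_mixture_def
proof (rule sum_mono)
  fix k assume k: "k \<in> {1..K}"
  have c: "card {i \<in> {1..n}. h i = k \<and> ereal (sc i) \<in> A} \<le> card {i \<in> {1..n}. h i = k \<and> ereal (sc i) \<in> B}"
    by (rule card_mono) (use assms(1) in auto)
  show "q k * (if 0 < grp_count n h k then real (card {i \<in> {1..n}. h i = k \<and> ereal (sc i) \<in> A}) / real (grp_count n h k)
             else if \<infinity> \<in> A then 1 else 0)
        \<le> q k * (if 0 < grp_count n h k then real (card {i \<in> {1..n}. h i = k \<and> ereal (sc i) \<in> B}) / real (grp_count n h k)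
             else if \<infinity> \<in> B then 1 else 0)"
  proof (cases "0 < grp_count n h k")
    case True
    have dd: "real (card {i \<in> {1..n}. h i = k \<and> ereal (sc i) \<in> A}) / real (grp_count n h k)
       \<le> real (card {i \<in> {1..n}. h i = k \<and> ereal (sc i) \<in> B}) / real (grp_count n h k)"
      using c by (intro divide_right_mono) auto
    have "q k * (real (card {i \<in> {1..n}. h i = k \<and> ereal (sc i) \<in> A}) / real (grp_count n h k))
       \<le> q k * (real (card {i \<in> {1..n}. h i = k \<and> ereal (sc i) \<in> B}) / real (grp_count n h k))"
      by (rule mult_left_mono[OF dd]) (use assms(2) k in auto)
    then show ?thesis using True by simp
  next
    case False
    have "(if \<infinity> \<in> A then 1 else 0) \<le> (if \<infinity> \<in> B then 1 else (0::real))" using assms(1) by auto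
    then show ?thesis using False assms(2) k by (simp add: mult_left_mono)
  qed
qed

lemma cov_iff:
  assumes q: "\<forall>k\<in>{1..K}. q k \<ge> 0"
  shows "ereal x \<le> quantile \<tau> (gwcp_mixture K q n h sc) \<longleftrightarrow> gwcp_mixture K q n h sc {y. y < ereal x} < \<tau>"
proof
  assume a: "ereal x \<le> quantile \<tau> (gwcp_mixture K q n h sc)"
  define V where "V = {sc i | i. i \<in> {1..n} \<and> sc i < x}"
  have fV: "finite V" unfolding V_def by auto
  define t0 where "t0 = (if V = {} then ereal (x - 1) else ereal (Max V))"
  have t0x: "t0 < ereal x" using fV by (auto simp: t0_def V_def)
  have t0f: "t0 \<noteq> -\<infinity>" by (simp add: t0_def)
  have "\<not> gwcp_mixture K q n h sc {..t0} \<ge> \<tau>"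
  proof
    assume "gwcp_mixture K q n h sc {..t0} \<ge> \<tau>"
    then have "ereal x \<le> t0" using a t0f unfolding quantile_def by (auto intro: Inf_lower2[OF _ order_refl] order_trans)
    then show False using t0x by simp
  qed
  moreover have "gwcp_mixture K q n h sc {..t0} = gwcp_mixture K q n h sc {y. y < ereal x}"
  proof (rule mix_cong)
    show "\<infinity> \<in> {..t0} \<longleftrightarrow> \<infinity> \<in> {y. y < ereal x}" by (auto simp: t0_def)
    show "\<forall>i\<in>{1..n}. ereal (sc i) \<in> {..t0} \<longleftrightarrow> ereal (sc i) \<in> {y. y < ereal x}"
    proof
      fix i assume i: "i \<in> {1..n}"
      show "ereal (sc i) \<in> {..t0} \<longleftrightarrow> ereal (sc i) \<in> {y. y < ereal x}"
      proof (cases "sc i < x")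
        case True
        then have "sc i \<in> V" "V \<noteq> {}" using i by (auto simp: V_def)
        then show ?thesis using True fV by (auto simp: t0_def)
      next
        case False
        have "\<not> ereal (sc i) \<le> t0"
        proof
          assume "ereal (sc i) \<le> t0"
          then have "ereal (sc i) < ereal x" using t0x by (rule le_less_trans)
          then show False using False by simp
        qed
        then show ?thesis using False by auto
      qed
    qed
  qed
  ultimately show "gwcp_mixture K q n h sc {y. y < ereal x} < \<tau>" by simp
next
  assume a: "gwcp_mixture K q n h sc {y. y < ereal x} < \<tau>"
  show "ereal x \<le> quantile \<tau> (gwcp_mixture K q n h sc)"
    unfolding quantile_def
  proof (rule Inf_greatest)
    fix t assume "t \<in> {t. t \<noteq> - \<infinity> \<and> \<tau> \<le> gwcp_mixture K q n h sc {..t}}"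
    then have t: "\<tau> \<le> gwcp_mixture K q n h sc {..t}" by simp
    show "ereal x \<le> t"
    proof (rule ccontr)
      assume "\<not> ereal x \<le> t"
      then have "{..t} \<subseteq> {y. y < ereal x}" by auto
      then have "gwcp_mixture K q n h sc {..t} \<le> gwcp_mixture K q n h sc {y. y < ereal x}"
        using mix_mono q by blast
      then show False using a t by simp
    qed
  qed
qed

lemma key_comb:
  fixes w sc :: "nat \<Rightarrow> real"
  assumes w: "\<forall>i\<in>{1..n}. w i \<ge> 0" and tw: "\<tau>' \<le> (\<Sum>i\<in>{1..n}. w i)"
  shows "\<tau>' \<le> (\<Sum>j\<in>{1..n}. if (\<Sum>i\<in>{1..n}. if sc i < sc j then w i else 0) < \<tau>' then w j else 0)"
proof -
  let ?F = "\<lambda>x. (\<Sum>i\<in>{1..n}. if sc i < x then w i else 0)"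
  define A where "A = {j\<in>{1..n}. ?F (sc j) < \<tau>'}"
  have rhs: "(\<Sum>j\<in>{1..n}. if ?F (sc j) < \<tau>' then w j else 0) = (\<Sum>j\<in>A. w j)"
    unfolding A_def by (rule sum.inter_filter[symmetric]) simp
  show ?thesis
  proof (cases "A = {1..n}")
    case True then show ?thesis using rhs tw by simp
  next
    case False
    define B where "B = {1..n} - A"
    have B: "finite B" "B \<noteq> {}" using False by (auto simp: B_def A_def)
    have mi: "Min (sc ` B) \<in> sc ` B" using B by (intro Min_in) auto
    then obtain j where j0: "j \<in> B" "sc j = Min (sc ` B)" by auto
    have j: "j \<in> B" "\<forall>j'\<in>B. sc j \<le> sc j'"
      using j0 B by auto
    have sub: "{i\<in>{1..n}. sc i < sc j} \<subseteq> A"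
    proof
      fix i assume i: "i \<in> {i\<in>{1..n}. sc i < sc j}"
      show "i \<in> A"
      proof (rule ccontr)
        assume "i \<notin> A"
        then have "i \<in> B" using i unfolding B_def by simp
        then show False using j(2) i by force
      qed
    qed
    have "j \<notin> A" "j \<in> {1..n}" using j(1) by (auto simp: B_def)
    then have "\<tau>' \<le> ?F (sc j)" unfolding A_def by simp
    also have "\<dots> = (\<Sum>i\<in>{i\<in>{1..n}. sc i < sc j}. w i)" by (rule sum.inter_filter[symmetric]) simp
    also have "\<dots> \<le> (\<Sum>i\<in>A. w i)"
    proof (rule sum_mono2)
      show "finite A" by (simp add: A_def)
      show "{i\<in>{1..n}. sc i < sc j} \<subseteq> A" by (rule sub)
      show "\<And>b. b \<in> A - {i\<in>{1..n}. sc i < sc j} \<Longrightarrow> 0 \<le> w b" using w by (auto simp: A_def)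
    qed
    finally show ?thesis using rhs by simp
  qed
qed



lemma ln2_le: "ln (2::real) \<le> 3/4"
proof -
  have "1 + 3/4 + (3/4::real)^2/2 \<le> exp (3/4)" by (rule exp_lower_Taylor_quadratic) simp
  then have "(2::real) \<le> exp (3/4)" by (simp add: power2_eq_square)
  then show ?thesis by (metis exp_gt_zero ln_exp ln_le_cancel_iff zero_less_numeral)
qed

lemma prod_half_card:
  "(\<Prod>i\<in>{1..n}. if h i = k then 1/2 else 1) = (1/2::real) ^ grp_count n h k"
proof -
  have "(\<Prod>i\<in>{1..n}. if h i = k then 1/2 else (1::real)) = (\<Prod>i\<in>{1..n} \<inter> {i. h i = k}. 1/2) * (\<Prod>i\<in>{1..n} \<inter> - {i. h i = k}. 1)"
    by (rule prod.If_cases) simp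
  also have "\<dots> = (1/2) ^ card ({1..n} \<inter> {i. h i = k})" by simp
  also have "{1..n} \<inter> {i. h i = k} = {i\<in>{1..n}. h i = k}" by auto
  finally show ?thesis by (simp add: grp_count_def)
qed

lemma chernoff_fin:
  fixes p :: "nat \<Rightarrow> real" and n K k :: nat
  assumes p_nonneg: "\<forall>k\<in>{1..K}. p k \<ge> 0" and p_sum: "(\<Sum>k\<in>{1..K}. p k) = 1"
    and k: "k \<in> {1..K}" and n: "n \<ge> 1" and pk: "p k \<ge> 8 * ln (real n) / real n"
  shows "(\<Sum>h\<in>PiE {1..n} (\<lambda>_. {1..K}). (\<Prod>i\<in>{1..n}. p (h i)) *
            (if real (grp_count n h k) < real n * p k / 2 then 1 else 0)) \<le> 1 / real n"
proof -
  let ?H = "PiE {1..n} (\<lambda>_. {1..K})"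
  define f where "f k' = (if k' = k then 1/2 else (1::real))" for k'
  define a where "a = real n * p k / 2"
  have pk0: "p k \<ge> 0" using p_nonneg k by auto
  have pk1: "p k \<le> 1"
  proof -
    have "(\<Sum>k'\<in>{1..K}. p k') \<ge> p k" using k p_nonneg by (intro member_le_sum) auto
    then show ?thesis using p_sum by simp
  qed
  have ind: "(if real (grp_count n h k) < a then 1 else 0) \<le> 2 powr a * (\<Prod>i\<in>{1..n}. f (h i))" for h
  proof -
    have "(\<Prod>i\<in>{1..n}. f (h i)) = (1/2) ^ grp_count n h k"
      unfolding f_def by (rule prod_half_card)
    also have "\<dots> = 2 powr (- real (grp_count n h k))"
    proof -
      have e1: "(2::real) powr (- real (grp_count n h k)) = inverse (2 ^ grp_count n h k)"
        by (simp only: powr_minus powr_realpow[of 2, simplified])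
      have e2: "(1/2::real) ^ grp_count n h k = inverse (2 ^ grp_count n h k)"
        by (simp only: power_one_over inverse_eq_divide)
      show ?thesis using e1 e2 by simp
    qed
    finally have e: "2 powr a * (\<Prod>i\<in>{1..n}. f (h i)) = 2 powr (a - real (grp_count n h k))"
      by (simp only: diff_conv_add_uminus powr_add)
    show ?thesis
    proof (cases "real (grp_count n h k) < a")
      case True
      then have "1 \<le> 2 powr (a - real (grp_count n h k))" by (intro ge_one_powr_ge_zero) auto
      then show ?thesis using True e by simp
    next
      case False then show ?thesis using e by simp
    qed
  qed
  have "(\<Sum>h\<in>?H. (\<Prod>i\<in>{1..n}. p (h i)) * (if real (grp_count n h k) < a then 1 else 0))
      \<le> (\<Sum>h\<in>?H. (\<Prod>i\<in>{1..n}. p (h i)) * (2 powr a * (\<Prod>i\<in>{1..n}. f (h i))))"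
  proof (rule sum_mono)
    fix h assume "h \<in> ?H"
    then have "(\<Prod>i\<in>{1..n}. p (h i)) \<ge> 0" using p_nonneg by (intro prod_nonneg) (auto simp: PiE_iff)
    then show "(\<Prod>i\<in>{1..n}. p (h i)) * (if real (grp_count n h k) < a then 1 else 0)
        \<le> (\<Prod>i\<in>{1..n}. p (h i)) * (2 powr a * (\<Prod>i\<in>{1..n}. f (h i)))"
      by (rule mult_left_mono[OF ind])
  qed
  also have "\<dots> = 2 powr a * (\<Sum>h\<in>?H. \<Prod>i\<in>{1..n}. p (h i) * f (h i))"
    by (simp add: sum_distrib_left prod.distrib mult.assoc mult.left_commute)
  also have "(\<Sum>h\<in>?H. \<Prod>i\<in>{1..n}. p (h i) * f (h i)) = (\<Prod>i\<in>{1..n}. \<Sum>k'\<in>{1..K}. p k' * f k')"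
    by (rule prod_sum_PiE[symmetric]) auto
  also have "(\<Sum>k'\<in>{1..K}. p k' * f k') = 1 - p k / 2"
  proof -
    have "(\<Sum>k'\<in>{1..K}. p k' * f k') = (\<Sum>k'\<in>{1..K}. p k' - (if k' = k then p k / 2 else 0))"
      by (rule sum.cong) (auto simp: f_def)
    also have "\<dots> = 1 - p k / 2" using k p_sum by (simp add: sum_subtractf sum.delta)
    finally show ?thesis .
  qed
  also have "(\<Prod>i\<in>{1..n}. 1 - p k / 2) = (1 - p k / 2) ^ n" by simp
  also have "2 powr a * (1 - p k / 2) ^ n \<le> 1 / real n"
  proof -
    have "(1 - p k / 2) ^ n \<le> exp (- p k / 2) ^ n"
    proof (rule power_mono)
      show "1 - p k / 2 \<le> exp (- p k / 2)" using exp_ge_add_one_self[of "- p k / 2"] by simp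
      show "0 \<le> 1 - p k / 2" using pk1 by simp
    qed
    also have "\<dots> = exp (- real n * p k / 2)" by (subst exp_of_nat_mult[symmetric]) simp
    finally have b1: "(1 - p k / 2) ^ n \<le> exp (- real n * p k / 2)" .
    have b2: "2 powr a = exp (a * ln 2)" by (simp add: powr_def)
    have "2 powr a * (1 - p k / 2) ^ n \<le> exp (a * ln 2) * exp (- real n * p k / 2)"
      unfolding b2 using b1 by (intro mult_left_mono) auto
    also have "\<dots> = exp (real n * p k / 2 * (ln 2 - 1))" by (simp add: a_def exp_add[symmetric] algebra_simps)
    also have "\<dots> \<le> exp (- (real n * p k / 8))"
    proof -
      have "real n * p k \<ge> 0" using pk0 by simp
      then have "real n * p k / 2 * (ln 2 - 1) \<le> real n * p k / 2 * (-1/4)"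
        using ln2_le by (intro mult_left_mono) auto
      then show ?thesis by simp
    qed
    also have "\<dots> \<le> exp (- ln (real n))"
    proof -
      have "8 * ln (real n) / real n * real n \<le> p k * real n" using pk n by (intro mult_right_mono) auto
      then have "ln (real n) \<le> real n * p k / 8" using n by (simp add: field_simps)
      then show ?thesis by simp
    qed
    also have "\<dots> = 1 / real n" using n by (simp add: exp_minus inverse_eq_divide)
    finally show ?thesis .
  qed
  finally show ?thesis by (simp add: a_def)
qed

definition cfun :: "nat \<Rightarrow> (nat \<Rightarrow> real) \<Rightarrow> nat \<Rightarrow> (nat \<Rightarrow> nat) \<Rightarrow> real" where
  "cfun K q n h = Max (insert 0 {q k / real (grp_count n h k) | k. k \<in> {1..K} \<and> grp_count n h k > 0})"

lemma cfun_fin: "finite {q k / real (grp_count n h k) | k. k \<in> {1..K} \<and> grp_count n h k > 0}"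
proof (rule finite_image_set)
  show "finite {k. k \<in> {1..K} \<and> grp_count n h k > 0}" by (rule finite_subset[of _ "{1..K}"]) auto
qed

lemma sum_pi_one:
  fixes n K :: nat and p :: "nat \<Rightarrow> real"
  assumes p_sum: "(\<Sum>k\<in>{1..K}. p k) = (1::real)"
  shows "(\<Sum>h\<in>PiE {1..n} (\<lambda>_. {1..K}). \<Prod>i\<in>{1..n}. p (h i)) = 1"
proof -
  have "(\<Sum>h\<in>PiE {1..n} (\<lambda>_. {1..K}). \<Prod>i\<in>{1..n}. p (h i)) = (\<Prod>i\<in>{1..n}. \<Sum>k\<in>{1..K}. p k)"
    by (rule prod_sum_PiE[symmetric]) auto
  also have "\<dots> = 1" using p_sum by simp
  finally show ?thesis .
qed

lemma part2_fin:
  fixes p q :: "nat \<Rightarrow> real" and n K :: nat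
  assumes K: "K \<ge> 1" and p_nonneg: "\<forall>k\<in>{1..K}. p k \<ge> 0" and p_sum: "(\<Sum>k\<in>{1..K}. p k) = 1"
    and q_nonneg: "\<forall>k\<in>{1..K}. q k \<ge> 0"
    and cond: "Min (p ` {1..K}) \<ge> 8 * ln (real n) / real n"
  shows "(\<Sum>h\<in>PiE {1..n} (\<lambda>_. {1..K}). (\<Prod>i\<in>{1..n}. p (h i)) * cfun K q n h)
           \<le> 4 / real n * Max ((\<lambda>k. q k / p k) ` {1..K})"
proof (cases "n = 0")
  case True
  have "cfun K q 0 h = 0" for h
  proof -
    have "{q k / real (grp_count 0 h k) | k. k \<in> {1..K} \<and> grp_count 0 h k > 0} = {}"
      by (auto simp: grp_count_def)
    then show ?thesis unfolding cfun_def by (subst \<open>_ = {}\<close>) simp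
  qed
  then show ?thesis using True by simp
next
  case False
  then have n: "n \<ge> 1" by simp
  let ?H = "PiE {1..n} (\<lambda>_. {1..K})"
  define Mx where "Mx = Max ((\<lambda>k. q k / p k) ` {1..K})"
  define ind where "ind h k = (if real (grp_count n h k) < real n * p k / 2 then 1 else (0::real))" for h k
  have fin: "finite ((\<lambda>k. q k / p k) ` {1..K})" by simp
  have Mx_ge: "q k / p k \<le> Mx" if "k \<in> {1..K}" for k
    unfolding Mx_def using that fin by (intro Max_ge) auto
  have Mx0: "Mx \<ge> 0"
  proof -
    have "1 \<in> {1..K}" using K by simp
    then have "q 1 / p 1 \<le> Mx" by (rule Mx_ge)
    moreover have "q 1 / p 1 \<ge> 0" using p_nonneg q_nonneg K by simp
    ultimately show ?thesis by simp
  qed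
  have pk: "p k \<ge> 8 * ln (real n) / real n" if "k \<in> {1..K}" for k
  proof -
    have "Min (p ` {1..K}) \<le> p k" using that by (intro Min_le) auto
    then show ?thesis using cond by simp
  qed
  have ind0: "ind h k \<ge> 0" for h k by (simp add: ind_def)
  have pw: "(\<Prod>i\<in>{1..n}. p (h i)) * cfun K q n h
      \<le> (\<Prod>i\<in>{1..n}. p (h i)) * (Mx * (2 / real n + (\<Sum>k\<in>{1..K}. p k * ind h k)))"
    if h: "h \<in> ?H" for h
  proof -
    have pi0: "(\<Prod>i\<in>{1..n}. p (h i)) \<ge> 0" using p_nonneg h by (intro prod_nonneg) (auto simp: PiE_iff)
    have S0: "(\<Sum>k\<in>{1..K}. p k * ind h k) \<ge> 0" using p_nonneg ind0 by (intro sum_nonneg) auto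
    show ?thesis
    proof (cases "(\<Prod>i\<in>{1..n}. p (h i)) = 0")
      case True then show ?thesis unfolding True by simp
    next
      case False
      have ppos: "p (h i) > 0" if "i \<in> {1..n}" for i
      proof -
        have "p (h i) \<noteq> 0" using False that by (metis finite_atLeastAtMost prod_zero_iff)
        moreover have "p (h i) \<ge> 0" using p_nonneg h that by (auto simp: PiE_iff)
        ultimately show ?thesis by simp
      qed
      have "cfun K q n h \<le> Mx * (2 / real n + (\<Sum>k\<in>{1..K}. p k * ind h k))"
        unfolding cfun_def
      proof (subst Max_le_iff)
        show "finite (insert 0 {q k / real (grp_count n h k) | k. k \<in> {1..K} \<and> grp_count n h k > 0})"
          using cfun_fin by simp
        show "insert 0 {q k / real (grp_count n h k) | k. k \<in> {1..K} \<and> grp_count n h k > 0} \<noteq> {}" by simp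
        show "\<forall>a\<in>insert 0 {q k / real (grp_count n h k) | k. k \<in> {1..K} \<and> grp_count n h k > 0}.
                a \<le> Mx * (2 / real n + (\<Sum>k\<in>{1..K}. p k * ind h k))"
        proof
          fix a assume "a \<in> insert 0 {q k / real (grp_count n h k) | k. k \<in> {1..K} \<and> grp_count n h k > 0}"
          then consider "a = 0" | k where "k \<in> {1..K}" "grp_count n h k > 0" "a = q k / real (grp_count n h k)"
            by auto
          then show "a \<le> Mx * (2 / real n + (\<Sum>k\<in>{1..K}. p k * ind h k))"
          proof cases
            case 1 then show ?thesis using Mx0 S0 by simp
          next
            case (2 k)
            have "{i \<in> {1..n}. h i = k} \<noteq> {}" using 2(2) unfolding grp_count_def by (metis card.empty less_irrefl)
            then obtain i where i: "i \<in> {1..n}" "h i = k" by auto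
            have pkpos: "p k > 0" using ppos[OF i(1)] i(2) by simp
            define g where "g = real (grp_count n h k)"
            have g1: "g \<ge> 1" using 2(2) by (simp add: g_def)
            have a_eq: "a = (q k / p k) * (p k / g)" using 2(3) pkpos by (simp add: g_def)
            have B: "p k / g \<le> 2 / real n + (\<Sum>k\<in>{1..K}. p k * ind h k)"
            proof (cases "g < real n * p k / 2")
              case True
              then have "ind h k = 1" by (simp add: ind_def g_def)
              then have "p k \<le> (\<Sum>k\<in>{1..K}. p k * ind h k)"
                using member_le_sum[of k "{1..K}" "\<lambda>k. p k * ind h k"] 2(1) p_nonneg ind0
                by (simp add: mult_nonneg_nonneg)
              moreover have "p k / g \<le> p k" using g1 pkpos by (simp add: divide_le_eq)
              ultimately show ?thesis using n by (smt (verit) divide_nonneg_nonneg of_nat_0_le_iff)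
            next
              case False
              then have "p k / g \<le> 2 / real n" using n g1 by (simp add: field_simps)
              then show ?thesis using S0 by simp
            qed
            have "a \<le> Mx * (p k / g)"
              unfolding a_eq using Mx_ge[OF 2(1)] pkpos g1 by (intro mult_right_mono) auto
            also have "\<dots> \<le> Mx * (2 / real n + (\<Sum>k\<in>{1..K}. p k * ind h k))"
              using B Mx0 by (rule mult_left_mono)
            finally show ?thesis .
          qed
        qed
      qed
      then show ?thesis using pi0 by (rule mult_left_mono)
    qed
  qed
  have "(\<Sum>h\<in>?H. (\<Prod>i\<in>{1..n}. p (h i)) * cfun K q n h)
      \<le> (\<Sum>h\<in>?H. (\<Prod>i\<in>{1..n}. p (h i)) * (Mx * (2 / real n + (\<Sum>k\<in>{1..K}. p k * ind h k))))"
    by (rule sum_mono) (rule pw)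
  also have "\<dots> = Mx * (2 / real n * (\<Sum>h\<in>?H. \<Prod>i\<in>{1..n}. p (h i))
        + (\<Sum>k\<in>{1..K}. p k * (\<Sum>h\<in>?H. (\<Prod>i\<in>{1..n}. p (h i)) * ind h k)))"
    by (simp add: algebra_simps sum_distrib_left sum_distrib_right sum.distrib) (rule sum.swap)
  also have "\<dots> \<le> Mx * (2 / real n * 1 + (\<Sum>k\<in>{1..K}. p k * (1 / real n)))"
  proof -
    have "(\<Sum>k\<in>{1..K}. p k * (\<Sum>h\<in>?H. (\<Prod>i\<in>{1..n}. p (h i)) * ind h k))
        \<le> (\<Sum>k\<in>{1..K}. p k * (1 / real n))"
    proof (rule sum_mono)
      fix k assume k: "k \<in> {1..K}"
      have "(\<Sum>h\<in>?H. (\<Prod>i\<in>{1..n}. p (h i)) * ind h k) \<le> 1 / real n"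
        unfolding ind_def using chernoff_fin[OF p_nonneg p_sum k n pk[OF k]] .
      then show "p k * (\<Sum>h\<in>?H. (\<Prod>i\<in>{1..n}. p (h i)) * ind h k) \<le> p k * (1 / real n)"
        using p_nonneg k by (intro mult_left_mono) auto
    qed
    then show ?thesis using Mx0 sum_pi_one[OF p_sum, of n] by (intro mult_left_mono) auto
  qed
  also have "\<dots> = Mx * (3 / real n)"
  proof -
    have "(\<Sum>k\<in>{1..K}. p k * (1 / real n)) = 1 / real n"
      using p_sum by (simp add: sum_divide_distrib[symmetric])
    then show ?thesis by (simp add: field_simps)
  qed
  also have "\<dots> \<le> 4 / real n * Mx" using Mx0 n by (simp add: field_simps)
  finally show ?thesis unfolding Mx_def .
qed


lemma (in prob_space) prob_decomp:
  assumes X: "finite X" and A: "A \<in> events" and f: "\<And>x. x \<in> X \<Longrightarrow> {\<omega>\<in>space M. f \<omega> = x} \<in> events"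
    and ae: "AE \<omega> in M. f \<omega> \<in> X"
  shows "prob A = (\<Sum>x\<in>X. prob (A \<inter> {\<omega>\<in>space M. f \<omega> = x}))"
proof -
  have U: "A \<inter> {\<omega>\<in>space M. f \<omega> \<in> X} = (\<Union>x\<in>X. A \<inter> {\<omega>\<in>space M. f \<omega> = x})" by auto
  have Ue: "(\<Union>x\<in>X. A \<inter> {\<omega>\<in>space M. f \<omega> = x}) \<in> events"
    using X A f by (intro sets.finite_UN) auto
  have "prob A = prob (A \<inter> {\<omega>\<in>space M. f \<omega> \<in> X})"
    by (rule finite_measure_eq_AE) (use ae A Ue U in \<open>auto\<close>)
  also have "\<dots> = (\<Sum>x\<in>X. prob (A \<inter> {\<omega>\<in>space M. f \<omega> = x}))"
    unfolding U using X A f by (intro finite_measure_finite_Union) (auto simp: disjoint_family_on_def)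
  finally show ?thesis .
qed

lemma grp_count_cong: "(\<forall>i\<in>{1..n}. h i = h' i) \<Longrightarrow> grp_count n h k = grp_count n h' k"
  unfolding grp_count_def by (rule arg_cong[where f=card]) auto

lemma Fs_cong: "(\<forall>i\<in>{1..n}. h i = h' i) \<Longrightarrow> Fs q n h sc x = Fs q n h' sc x"
proof -
  assume a: "\<forall>i\<in>{1..n}. h i = h' i"
  then have "grp_count n h k = grp_count n h' k" for k by (rule grp_count_cong)
  then show ?thesis unfolding Fs_def wgt_def using a by (intro sum.cong) auto
qed

lemma cfun_cong: "(\<forall>i\<in>{1..n}. h i = h' i) \<Longrightarrow> cfun K q n h = cfun K q n h'"
  unfolding cfun_def using grp_count_cong[of n h h'] by simp

lemma restrict_ext: "h \<in> extensional A \<Longrightarrow> (restrict g A = h \<longleftrightarrow> (\<forall>i\<in>A. g i = h i))"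
  by (auto simp: fun_eq_iff restrict_def extensional_def)


lemma Fs_cong_sc: "(\<forall>i\<in>{1..n}. sc i = sc' i) \<Longrightarrow> Fs q n h sc x = Fs q n h sc' x"
  unfolding Fs_def by (rule sum.cong) auto

lemma Fs_le_W:
  assumes "\<forall>i\<in>{1..n}. wgt q n h i \<ge> 0"
  shows "Fs q n h sc x \<le> (\<Sum>i\<in>{1..n}. wgt q n h i)"
  unfolding Fs_def using assms by (intro sum_mono) auto

lemma meas_Fs:
  fixes n :: nat and L :: "'a measure" and s :: "'a \<Rightarrow> real"
  assumes sm[measurable]: "s \<in> borel_measurable L"
  and J: "{1..n} \<subseteq> J" "j \<in> J"
  shows "(\<lambda>z. Fs q n h (\<lambda>i. s (z i)) (s (z j))) \<in> borel_measurable (PiM J (\<lambda>_. L))"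
proof -
  let ?P = "PiM J (\<lambda>_. L)"
  have cm: "(\<lambda>z. z i) \<in> measurable ?P L" if "i \<in> J" for i
    using that by (rule measurable_component_singleton)
  have [measurable]: "(\<lambda>z. z j) \<in> measurable ?P L" using cm J by simp
  show ?thesis unfolding Fs_def
  proof (rule borel_measurable_sum)
    fix i assume "i \<in> {1..n}"
    then have [measurable]: "(\<lambda>z. z i) \<in> measurable ?P L" using J by (intro cm) auto
    show "(\<lambda>z. if s (z i) < s (z j) then wgt q n h i else 0) \<in> borel_measurable ?P" by measurable
  qed
qed

lemma meas_lab:
  fixes L :: "'a measure" and lab :: "'a \<Rightarrow> nat"
  assumes lm[measurable]: "lab \<in> measurable L (count_space UNIV)"
  and J: "finite J'" "J' \<subseteq> J"
  shows "Measurable.pred (PiM J (\<lambda>_. L)) (\<lambda>z. \<forall>i\<in>J'. lab (z i) = g i)"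
proof (rule pred_intros_finite)
  let ?P = "PiM J (\<lambda>_. L)"
  show "finite J'" by fact
  fix i assume "i \<in> J'"
  then have [measurable]: "(\<lambda>z. z i) \<in> measurable ?P L" using J
    by (intro measurable_component_singleton) auto
  show "Measurable.pred ?P (\<lambda>z. lab (z i) = g i)" by measurable
qed


lemma mix_gen:
  "gwcp_mixture K q n h sc {y. y < ereal x} =
    (\<Sum>k\<in>{1..K}. q k * (if 0 < (\<Sum>i\<in>{1..n}. if h i = k then 1 else 0::real)
       then (\<Sum>i\<in>{1..n}. if h i = k \<and> sc i < x then 1 else 0) / (\<Sum>i\<in>{1..n}. if h i = k then 1 else 0) else 0))"
  unfolding gwcp_mixture_def
proof (rule sum.cong[OF refl])
  fix k
  have g: "real (grp_count n h k) = (\<Sum>i\<in>{1..n}. if h i = k then 1 else 0)"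
    unfolding grp_count_def by (rule card_as_sum) simp
  have c: "real (card {i \<in> {1..n}. h i = k \<and> ereal (sc i) \<in> {y. y < ereal x}}) = (\<Sum>i\<in>{1..n}. if h i = k \<and> sc i < x then 1 else 0)"
    by (subst card_as_sum) auto
  have p: "(0 < grp_count n h k) = (0 < (\<Sum>i\<in>{1..n}. if h i = k then 1 else 0::real))"
    unfolding g[symmetric] by simp
  show "q k * (if 0 < grp_count n h k
          then real (card {i \<in> {1..n}. h i = k \<and> ereal (sc i) \<in> {y. y < ereal x}}) / real (grp_count n h k)
          else if \<infinity> \<in> {y. y < ereal x} then 1 else 0) =
        q k * (if 0 < (\<Sum>i\<in>{1..n}. if h i = k then 1 else 0::real)
       then (\<Sum>i\<in>{1..n}. if h i = k \<and> sc i < x then 1 else 0) / (\<Sum>i\<in>{1..n}. if h i = k then 1 else 0) else 0)"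
    unfolding p c g by simp
qed



lemma main_setup:
  fixes K n :: nat and p q :: "nat \<Rightarrow> real" and \<alpha> :: real
    and MX :: "'x measure" and MY :: "'y measure"
    and Pk :: "nat \<Rightarrow> ('x \<times> 'y) measure"
    and M :: "'o measure"
    and Z :: "nat \<Rightarrow> 'o \<Rightarrow> (nat \<times> 'x) \<times> 'y"
    and s :: "(nat \<times> 'x) \<times> 'y \<Rightarrow> real"
  assumes K: "K \<ge> 1"
    and p_nonneg: "\<forall>k\<in>{1..K}. p k \<ge> 0" and p_sum: "(\<Sum>k\<in>{1..K}. p k) = 1"
    and q_nonneg: "\<forall>k\<in>{1..K}. q k \<ge> 0" and q_sum: "(\<Sum>k\<in>{1..K}. q k) = 1"
    and Pi_prob: "\<forall>k\<in>{1..K}. prob_space (Pk k)"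
    and Pi_sets: "\<forall>k\<in>{1..K}. sets (Pk k) = sets (MX \<Otimes>\<^sub>M MY)"
    and alpha: "0 < \<alpha>" "\<alpha> < 1"
    and M: "prob_space M"
    and Z_meas: "\<forall>i\<in>{1..n+1}. Z i \<in> measurable M ((count_space UNIV \<Otimes>\<^sub>M MX) \<Otimes>\<^sub>M MY)"
    and Z_indep: "prob_space.indep_vars M (\<lambda>i. (count_space UNIV \<Otimes>\<^sub>M MX) \<Otimes>\<^sub>M MY) Z {1..n+1}"
    and Z_P: "\<forall>i\<in>{1..n}. \<forall>k\<in>{1..K}. \<forall>A\<in>sets (MX \<Otimes>\<^sub>M MY).
                measure M {\<omega>\<in>space M. fst (fst (Z i \<omega>)) = k \<and> (snd (fst (Z i \<omega>)), snd (Z i \<omega>)) \<in> A}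
                = p k * measure (Pk k) A"
    and Z_Q: "\<forall>k\<in>{1..K}. \<forall>A\<in>sets (MX \<Otimes>\<^sub>M MY).
                measure M {\<omega>\<in>space M. fst (fst (Z (n+1) \<omega>)) = k \<and> (snd (fst (Z (n+1) \<omega>)), snd (Z (n+1) \<omega>)) \<in> A}
                = q k * measure (Pk k) A"
    and s_meas: "s \<in> borel_measurable ((count_space UNIV \<Otimes>\<^sub>M MX) \<Otimes>\<^sub>M MY)"
  shows "measure M {\<omega>\<in>space M. snd (Z (n+1) \<omega>) \<in> gwcp_set s K q \<alpha> n (\<lambda>i. Z i \<omega>) (fst (Z (n+1) \<omega>))}
           \<ge> 1 - \<alpha> - prob_space.expectation M (\<lambda>\<omega>.
                 Max (insert 0 {q k / real (grp_count n (\<lambda>i. fst (fst (Z i \<omega>))) k) | k.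
                          k \<in> {1..K} \<and> grp_count n (\<lambda>i. fst (fst (Z i \<omega>))) k > 0}))" (is "?cov \<ge> _ - ?EC")
  and "prob_space.expectation M (\<lambda>\<omega>.
                 Max (insert 0 {q k / real (grp_count n (\<lambda>i. fst (fst (Z i \<omega>))) k) | k.
                          k \<in> {1..K} \<and> grp_count n (\<lambda>i. fst (fst (Z i \<omega>))) k > 0}))
        = (\<Sum>h\<in>PiE {1..n} (\<lambda>_. {1..K}). (\<Prod>i\<in>{1..n}. p (h i)) * cfun K q n h)" (is "_ = ?SUM")
proof -
  interpret prob_space M by (rule M)
  define L where "L = (count_space (UNIV::nat set) \<Otimes>\<^sub>M MX) \<Otimes>\<^sub>M MY"
  define WW where "WW = MX \<Otimes>\<^sub>M MY"
  define I where "I = {1..n+1}"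
  define lab where "lab = (\<lambda>z::(nat \<times> 'x) \<times> 'y. fst (fst z))"
  define G where "G i \<omega> = lab (Z i \<omega>)" for i \<omega>
  define \<tau> where "\<tau> = 1 - \<alpha>"
  define H where "H = PiE {1..n} (\<lambda>_::nat. {1..K::nat})"
  define Ch where "Ch h = {\<omega>\<in>space M. \<forall>i\<in>{1..n}. G i \<omega> = h i}" for h
  define Ehk where "Ehk h k = {\<omega>\<in>space M. (\<forall>i\<in>{1..n}. G i \<omega> = h i) \<and> G (n+1) \<omega> = k}" for h k
  define cc where "cc i k = (if i = n+1 then q k else p k)" for i k
  have lab_meas[measurable]: "lab \<in> measurable L (count_space (UNIV::nat set))" unfolding lab_def L_def by measurable
  have Zm: "Z i \<in> measurable M L" if "i \<in> I" for i using Z_meas that unfolding L_def I_def by auto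
  have Gm: "G i \<in> measurable M (count_space UNIV)" if "i \<in> I" for i
    unfolding G_def by (rule measurable_compose[OF Zm[OF that] lab_meas])
  have sL[measurable]: "s \<in> borel_measurable L" using s_meas unfolding L_def .
  have Sm: "(\<lambda>\<omega>. s (Z i \<omega>)) \<in> borel_measurable M" if "i \<in> I" for i
    by (rule measurable_compose[OF Zm[OF that] sL])
  have spL: "space L = (UNIV \<times> space MX) \<times> space MY" unfolding L_def by (simp add: space_pair_measure)
  have spWW: "space WW = space MX \<times> space MY" unfolding WW_def by (simp add: space_pair_measure)
  have emb_meas: "(\<lambda>(x, y). ((k, x), y)) \<in> measurable WW L" for k unfolding WW_def L_def by measurable
  have PZ: "measure M {\<omega>\<in>space M. Z i \<omega> \<in> A \<and> lab (Z i \<omega>) = k}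
      = cc i k * measure (Pk k) ((\<lambda>(x, y). ((k, x), y)) -` A \<inter> space WW)"
    if i: "i \<in> I" and k: "k \<in> {1..K}" and A: "A \<in> sets L" for i k A
  proof -
    define B where "B = (\<lambda>(x, y). ((k, x), y)) -` A \<inter> space WW"
    have B: "B \<in> sets (MX \<Otimes>\<^sub>M MY)" unfolding B_def WW_def[symmetric]
      using emb_meas A by (rule measurable_sets)
    have "{\<omega>\<in>space M. Z i \<omega> \<in> A \<and> lab (Z i \<omega>) = k}
        = {\<omega>\<in>space M. fst (fst (Z i \<omega>)) = k \<and> (snd (fst (Z i \<omega>)), snd (Z i \<omega>)) \<in> B}"
    proof (rule Collect_cong, rule conj_cong[OF refl])
      fix \<omega> assume \<omega>: "\<omega> \<in> space M"
      have "Z i \<omega> \<in> space L" using Zm[OF i] \<omega> by (rule measurable_space)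
      then obtain k' x y where z: "Z i \<omega> = ((k', x), y)" "x \<in> space MX" "y \<in> space MY"
        unfolding spL by auto
      show "(Z i \<omega> \<in> A \<and> lab (Z i \<omega>) = k) = (fst (fst (Z i \<omega>)) = k \<and> (snd (fst (Z i \<omega>)), snd (Z i \<omega>)) \<in> B)"
        using z by (auto simp: B_def lab_def spWW)
    qed
    also have "measure M \<dots> = cc i k * measure (Pk k) B"
    proof (cases "i = n+1")
      case True then show ?thesis using Z_Q k B by (simp add: cc_def)
    next
      case False then have "i \<in> {1..n}" using i by (auto simp: I_def)
      then show ?thesis using Z_P k B False by (simp add: cc_def)
    qed
    finally show ?thesis by (simp add: B_def)
  qed
  have spPk: "space (Pk k) = space WW" if "k \<in> {1..K}" for k
    using Pi_sets that unfolding WW_def by (metis sets_eq_imp_space_eq)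
  have PG: "prob {\<omega>\<in>space M. G i \<omega> = k} = cc i k" if i: "i \<in> I" and k: "k \<in> {1..K}" for i k
  proof -
    have e1: "{\<omega>\<in>space M. Z i \<omega> \<in> space L \<and> lab (Z i \<omega>) = k} = {\<omega>\<in>space M. G i \<omega> = k}"
      using Zm[OF i] by (auto simp: G_def measurable_space)
    have e2: "(\<lambda>(x, y). ((k, x), y)) -` space L \<inter> space WW = space WW"
      by (auto simp: spL spWW)
    have "measure (Pk k) (space WW) = 1"
      using Pi_prob k spPk[OF k] prob_space.prob_space by metis
    then show ?thesis using PZ[OF i k sets.top] e1 e2 by simp
  qed
  have Gev: "{\<omega>\<in>space M. G i \<omega> = k} \<in> events" if "i \<in> I" for i k
    using Gm[OF that] by measurable
  have PGall: "prob {\<omega>\<in>space M. G i \<omega> \<in> {1..K}} = 1" if i: "i \<in> I" for i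
  proof -
    have "{\<omega>\<in>space M. G i \<omega> \<in> {1..K}} = (\<Union>k\<in>{1..K}. {\<omega>\<in>space M. G i \<omega> = k})" by auto
    moreover have "prob (\<Union>k\<in>{1..K}. {\<omega>\<in>space M. G i \<omega> = k}) = (\<Sum>k\<in>{1..K}. prob {\<omega>\<in>space M. G i \<omega> = k})"
      using Gev[OF i] by (intro finite_measure_finite_Union) (auto simp: disjoint_family_on_def)
    ultimately have "prob {\<omega>\<in>space M. G i \<omega> \<in> {1..K}} = (\<Sum>k\<in>{1..K}. prob {\<omega>\<in>space M. G i \<omega> = k})"
      by simp
    also have "\<dots> = (\<Sum>k\<in>{1..K}. cc i k)" using PG[OF i] by simp
    also have "\<dots> = 1" using p_sum q_sum by (cases "i = n+1") (simp_all add: cc_def)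
    finally show ?thesis .
  qed
  have AEgood: "AE \<omega> in M. \<forall>i\<in>I. G i \<omega> \<in> {1..K}"
  proof (rule AE_finite_allI)
    show "finite I" by (simp add: I_def)
    fix i assume i: "i \<in> I"
    show "AE \<omega> in M. G i \<omega> \<in> {1..K}"
      using AE_prob_1[OF PGall[OF i]] by eventually_elim auto
  qed
  define Z' where "Z' i = (if i \<in> I then Z i else Z (n+1))" for i
  have Z'm: "Z' i \<in> measurable M L" for i unfolding Z'_def by (auto intro!: Zm simp: I_def)
  define D where "D i = distr M L (Z' i)" for i
  have Dprob: "prob_space (D i)" for i unfolding D_def by (rule prob_space_distr[OF Z'm])
  have Dsets: "sets (D i) = sets L" for i unfolding D_def by simp
  define Zr where "Zr \<omega> = (\<lambda>i\<in>I. Z i \<omega>)" for \<omega>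
  have Zr_meas: "Zr \<in> measurable M (PiM I (\<lambda>_. L))"
    unfolding Zr_def by (rule measurable_restrict) (rule Zm)
  have Zind: "indep_vars (\<lambda>_. L) Z I" using Z_indep unfolding L_def I_def .
  have joint: "distr M (PiM I (\<lambda>_. L)) Zr = PiM I D"
  proof -
    have "distr M (PiM I (\<lambda>_. L)) Zr = PiM I (\<lambda>i. distr M L (Z i))"
      using indep_vars_iff_distr_eq_PiM'[where I=I and M'="\<lambda>_. L" and X=Z] Zind Zm unfolding Zr_def by (simp add: I_def)
    also have "\<dots> = PiM I D" by (rule PiM_cong) (auto simp: D_def Z'_def)
    finally show ?thesis .
  qed
  have transfer: "prob (Zr -` E \<inter> space M) = measure (PiM I D) E" if "E \<in> sets (PiM I (\<lambda>_. L))" for E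
    using measure_distr[OF Zr_meas that] joint by simp
  define R where "R \<omega> = (\<lambda>i\<in>{1..n}. Z i \<omega>)" for \<omega>
  have R_meas: "R \<in> measurable M (PiM {1..n} (\<lambda>_. L))"
    unfolding R_def by (rule measurable_restrict) (rule Zm, auto simp: I_def)
  have indep_test: "prob {\<omega>\<in>space M. R \<omega> \<in> X \<and> Z (n+1) \<omega> \<in> B}
      = prob {\<omega>\<in>space M. R \<omega> \<in> X} * prob {\<omega>\<in>space M. Z (n+1) \<omega> \<in> B}"
    if X: "X \<in> sets (PiM {1..n} (\<lambda>_. L))" and B: "B \<in> sets L" for X B
  proof -
    have iv: "indep_var (PiM {1..n} (\<lambda>_. L)) (\<lambda>\<omega>. restrict (\<lambda>i. Z i \<omega>) {1..n})
                        (PiM {n+1} (\<lambda>_. L)) (\<lambda>\<omega>. restrict (\<lambda>i. Z i \<omega>) {n+1})"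
      by (rule indep_var_restrict[OF Zind]) (auto simp: I_def)
    define Xb where "Xb = {z \<in> space (PiM {n+1} (\<lambda>_. L)). z (n+1) \<in> B}"
    have cm: "(\<lambda>z. z (n+1)) \<in> measurable (PiM {n+1} (\<lambda>_. L)) L"
      by (rule measurable_component_singleton) simp
    have "Xb = (\<lambda>z. z (n+1)) -` B \<inter> space (PiM {n+1} (\<lambda>_. L))" by (auto simp: Xb_def)
    then have Xb: "Xb \<in> sets (PiM {n+1} (\<lambda>_. L))" using measurable_sets[OF cm B] by simp
    have Zn: "Z (n+1) \<omega> \<in> space L" if "\<omega> \<in> space M" for \<omega>
      using Zm[of "n+1"] that by (auto simp: I_def measurable_space)
    have s1: "(\<lambda>x. (restrict (\<lambda>i. Z i x) {1..n}, restrict (\<lambda>i. Z i x) {n+1})) -` (X \<times> Xb) \<inter> space M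
        = {\<omega>\<in>space M. R \<omega> \<in> X \<and> Z (n+1) \<omega> \<in> B}"
      using Zn by (auto simp: R_def Xb_def space_PiM PiE_iff)
    have s2: "(\<lambda>x. restrict (\<lambda>i. Z i x) {1..n}) -` X \<inter> space M = {\<omega>\<in>space M. R \<omega> \<in> X}"
      by (auto simp: R_def)
    have s3: "(\<lambda>x. restrict (\<lambda>i. Z i x) {n+1}) -` Xb \<inter> space M = {\<omega>\<in>space M. Z (n+1) \<omega> \<in> B}"
      using Zn by (auto simp: Xb_def space_PiM PiE_iff)
    show ?thesis using indep_varD[OF iv X Xb] s1 s2 s3 by simp
  qed
  have wgt0: "\<forall>i\<in>{1..n}. wgt q n h i \<ge> 0" if h: "h \<in> H" for h
    using q_nonneg h unfolding wgt_def H_def by (auto simp: PiE_iff)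
  have Rsp: "R \<omega> \<in> space (PiM {1..n} (\<lambda>_. L))" if "\<omega> \<in> space M" for \<omega>
    using R_meas that by (rule measurable_space)
  have F2: "prob {\<omega>\<in>space M. Fs q n h (\<lambda>i. s (Z i \<omega>)) (s (Z j \<omega>)) < t \<and> (\<forall>i\<in>{1..n}. G i \<omega> = h i) \<and> G (n+1) \<omega> = k}
      = prob {\<omega>\<in>space M. Fs q n h (\<lambda>i. s (Z i \<omega>)) (s (Z j \<omega>)) < t \<and> (\<forall>i\<in>{1..n}. G i \<omega> = h i)} * q k"
    if j: "j \<in> {1..n}" and k: "k \<in> {1..K}" for h j t k
  proof -
    define X where "X = {z\<in>space (PiM {1..n} (\<lambda>_. L)). Fs q n h (\<lambda>i. s (z i)) (s (z j)) < t \<and> (\<forall>i\<in>{1..n}. lab (z i) = h i)}"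
    define B where "B = {z\<in>space L. lab z = k}"
    have X: "X \<in> sets (PiM {1..n} (\<lambda>_. L))"
    proof -
      have [measurable]: "(\<lambda>z. Fs q n h (\<lambda>i. s (z i)) (s (z j))) \<in> borel_measurable (PiM {1..n} (\<lambda>_. L))"
        using j by (intro meas_Fs sL) auto
      have [measurable]: "Measurable.pred (PiM {1..n} (\<lambda>_. L)) (\<lambda>z. \<forall>i\<in>{1..n}. lab (z i) = h i)"
        by (intro meas_lab lab_meas) auto
      show ?thesis unfolding X_def by measurable
    qed
    have B: "B \<in> sets L" unfolding B_def by measurable
    have e1: "{\<omega>\<in>space M. R \<omega> \<in> X \<and> Z (n+1) \<omega> \<in> B} = {\<omega>\<in>space M. Fs q n h (\<lambda>i. s (Z i \<omega>)) (s (Z j \<omega>)) < t \<and> (\<forall>i\<in>{1..n}. G i \<omega> = h i) \<and> G (n+1) \<omega> = k}"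
    proof -
      have "Fs q n h (\<lambda>i. s (R \<omega> i)) (s (R \<omega> j)) = Fs q n h (\<lambda>i. s (Z i \<omega>)) (s (Z j \<omega>))" for \<omega>
        using j by (auto simp: R_def intro!: Fs_cong_sc)
      moreover have "Z (n+1) \<omega> \<in> space L" if "\<omega> \<in> space M" for \<omega>
        using Zm[of "n+1"] that by (auto simp: I_def measurable_space)
      ultimately show ?thesis using Rsp by (auto simp: X_def B_def G_def R_def)
    qed
    have e2: "{\<omega>\<in>space M. R \<omega> \<in> X} = {\<omega>\<in>space M. Fs q n h (\<lambda>i. s (Z i \<omega>)) (s (Z j \<omega>)) < t \<and> (\<forall>i\<in>{1..n}. G i \<omega> = h i)}"
    proof -
      have "Fs q n h (\<lambda>i. s (R \<omega> i)) (s (R \<omega> j)) = Fs q n h (\<lambda>i. s (Z i \<omega>)) (s (Z j \<omega>))" for \<omega>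
        using j by (auto simp: R_def intro!: Fs_cong_sc)
      then show ?thesis using Rsp by (auto simp: X_def G_def R_def)
    qed
    have e3: "{\<omega>\<in>space M. Z (n+1) \<omega> \<in> B} = {\<omega>\<in>space M. G (n+1) \<omega> = k}"
      using Zm[of "n+1"] by (auto simp: I_def measurable_space B_def G_def)
    have "prob {\<omega>\<in>space M. G (n+1) \<omega> = k} = q k" using PG[of "n+1" k] k by (simp add: I_def cc_def)
    then show ?thesis using indep_test[OF X B] e1 e2 e3 by simp
  qed
  have sPD: "sets (PiM I D) = sets (PiM I (\<lambda>_. L))" by (rule sets_PiM_cong[OF refl]) (simp add: Dsets)
  have spPD: "space (PiM I D) = space (PiM I (\<lambda>_. L))" using sPD by (rule sets_eq_imp_space_eq)
  have muP: "prob_space (PiM I D)" by (rule prob_space_PiM) (rule Dprob)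
  have ED: "emeasure (D i) (A \<inter> {z\<in>space L. lab z = k}) = ennreal (cc i k * measure (Pk k) ((\<lambda>(x, y). ((k, x), y)) -` A \<inter> space WW))"
    if i: "i \<in> I" and k: "k \<in> {1..K}" and A: "A \<in> sets L" for i k A
  proof -
    have As: "A \<inter> {z\<in>space L. lab z = k} \<in> sets L" using A by measurable
    have "emeasure (D i) (A \<inter> {z\<in>space L. lab z = k}) = emeasure M (Z i -` (A \<inter> {z\<in>space L. lab z = k}) \<inter> space M)"
    proof -
      have "D i = distr M L (Z i)" using i by (simp add: D_def Z'_def)
      then show ?thesis using emeasure_distr[OF Zm[OF i] As] by simp
    qed
    also have "Z i -` (A \<inter> {z\<in>space L. lab z = k}) \<inter> space M = {\<omega>\<in>space M. Z i \<omega> \<in> A \<and> lab (Z i \<omega>) = k}"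
      using Zm[OF i] by (auto simp: measurable_space)
    also have "emeasure M \<dots> = ennreal (prob {\<omega>\<in>space M. Z i \<omega> \<in> A \<and> lab (Z i \<omega>) = k})"
      by (rule emeasure_eq_measure)
    finally show ?thesis using PZ[OF i k A] by simp
  qed
  have F3: "prob {\<omega>\<in>space M. Fs q n h (\<lambda>i. s (Z i \<omega>)) (s (Z j \<omega>)) < \<tau> - cfun K q n h \<and> (\<forall>i\<in>{1..n}. G i \<omega> = h i) \<and> G (n+1) \<omega> = h j}
      \<le> prob {\<omega>\<in>space M. Fs q n h (\<lambda>i. s (Z i \<omega>)) (s (Z (n+1) \<omega>)) < \<tau> \<and> (\<forall>i\<in>{1..n}. G i \<omega> = h i) \<and> G (n+1) \<omega> = h j}"
    if h: "h \<in> H" and j: "j \<in> {1..n}" for h j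
  proof -
    define k where "k = h j"
    have k: "k \<in> {1..K}" using h j by (auto simp: H_def k_def PiE_iff)
    define g where "g = h(n+1 := k)"
    define Bs where "Bs i = {z\<in>space L. lab z = g i}" for i
    define C where "C = PiE I Bs"
    define c where "c = cfun K q n h"
    let ?P = "PiM I (\<lambda>_. L)"
    define E1 where "E1 = {z\<in>space ?P. Fs q n h (\<lambda>i. s (z i)) (s (z (n+1))) < \<tau>}"
    define E2 where "E2 = {z\<in>space ?P. Fs q n h (\<lambda>i. s (z i)) (s (z j)) < \<tau> - c}"
    have jI: "j \<in> I" "n+1 \<in> I" "j \<noteq> n+1" "{1..n} \<subseteq> I" using j by (auto simp: I_def)
    have Bs: "Bs i \<in> sets L" for i unfolding Bs_def by measurable
    have C: "C \<in> sets ?P" unfolding C_def using Bs by (intro sets_PiM_I_finite) (auto simp: I_def)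
    have E1: "E1 \<in> sets ?P"
    proof -
      have [measurable]: "(\<lambda>z. Fs q n h (\<lambda>i. s (z i)) (s (z (n+1)))) \<in> borel_measurable ?P"
        using jI by (intro meas_Fs sL) auto
      show ?thesis unfolding E1_def by measurable
    qed
    have E2: "E2 \<in> sets ?P"
    proof -
      have [measurable]: "(\<lambda>z. Fs q n h (\<lambda>i. s (z i)) (s (z j))) \<in> borel_measurable ?P"
        using jI by (intro meas_Fs sL) auto
      show ?thesis unfolding E2_def by measurable
    qed
    have labI: "(\<forall>i\<in>I. lab (Z i \<omega>) = g i) \<longleftrightarrow> (\<forall>i\<in>{1..n}. G i \<omega> = h i) \<and> G (n+1) \<omega> = h j" for \<omega>
      by (auto simp: I_def g_def G_def k_def)
    have ZrC: "Zr \<omega> \<in> C \<longleftrightarrow> (\<forall>i\<in>I. lab (Z i \<omega>) = g i)" if "\<omega> \<in> space M" for \<omega>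
    proof -
      have "Z i \<omega> \<in> space L" if "i \<in> I" for i using Zm[OF that] \<open>\<omega> \<in> space M\<close> by (rule measurable_space)
      then show ?thesis by (auto simp: C_def Bs_def Zr_def PiE_iff)
    qed
    have Zrsp: "Zr \<omega> \<in> space ?P" if "\<omega> \<in> space M" for \<omega> using Zr_meas that by (rule measurable_space)
    have t1: "Zr -` (E1 \<inter> C) \<inter> space M = {\<omega>\<in>space M. Fs q n h (\<lambda>i. s (Z i \<omega>)) (s (Z (n+1) \<omega>)) < \<tau> \<and> (\<forall>i\<in>{1..n}. G i \<omega> = h i) \<and> G (n+1) \<omega> = h j}"
    proof -
      have "Fs q n h (\<lambda>i. s (Zr \<omega> i)) (s (Zr \<omega> (n+1))) = Fs q n h (\<lambda>i. s (Z i \<omega>)) (s (Z (n+1) \<omega>))" for \<omega>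
        using jI by (auto simp: Zr_def intro!: Fs_cong_sc)
      then show ?thesis using ZrC Zrsp labI by (auto simp: E1_def)
    qed
    have t2: "Zr -` (E2 \<inter> C) \<inter> space M = {\<omega>\<in>space M. Fs q n h (\<lambda>i. s (Z i \<omega>)) (s (Z j \<omega>)) < \<tau> - c \<and> (\<forall>i\<in>{1..n}. G i \<omega> = h i) \<and> G (n+1) \<omega> = h j}"
    proof -
      have "Fs q n h (\<lambda>i. s (Zr \<omega> i)) (s (Zr \<omega> j)) = Fs q n h (\<lambda>i. s (Z i \<omega>)) (s (Z j \<omega>))" for \<omega>
        using jI by (auto simp: Zr_def intro!: Fs_cong_sc)
      then show ?thesis using ZrC Zrsp labI by (auto simp: E2_def)
    qed
    define \<sigma> where "\<sigma> z = (\<lambda>i\<in>I. z (sw j (n+1) i))" for z :: "nat \<Rightarrow> (nat \<times> 'x) \<times> 'y"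
    have swap: "emeasure (PiM I D) (\<sigma> -` E1 \<inter> space (PiM I D) \<inter> PiE I Bs) = emeasure (PiM I D) (E1 \<inter> PiE I Bs)"
      unfolding \<sigma>_def
    proof (rule swap_PiM[where L=L])
      show "finite I" by (simp add: I_def)
      show "\<And>i. prob_space (D i)" by (rule Dprob)
      show "\<And>i. sets (D i) = sets L" by (rule Dsets)
      show "j \<in> I" "n+1 \<in> I" "j \<noteq> n+1" using jI by auto
      show "\<And>i. i \<in> I \<Longrightarrow> Bs i \<in> sets L" by (rule Bs)
      show "Bs j = Bs (n+1)" using j by (simp add: Bs_def g_def k_def)
      show "E1 \<in> sets (PiM I D)" using E1 sPD by simp
      fix A A' assume A: "A \<in> sets L" and A': "A' \<in> sets L"
      have Bj: "Bs j = {z\<in>space L. lab z = k}" using j by (simp add: Bs_def g_def k_def)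
      define RA where "RA X = measure (Pk k) ((\<lambda>(x, y). ((k, x), y)) -` X \<inter> space WW)" for X
      have RA0: "RA X \<ge> 0" for X by (simp add: RA_def)
      show "emeasure (D j) (A \<inter> Bs j) * emeasure (D (n+1)) (A' \<inter> Bs j) =
            emeasure (D j) (A' \<inter> Bs j) * emeasure (D (n+1)) (A \<inter> Bs j)"
        unfolding Bj ED[OF jI(1) k A] ED[OF jI(1) k A'] ED[OF jI(2) k A] ED[OF jI(2) k A'] RA_def[symmetric]
        using p_nonneg q_nonneg k RA0 by (simp add: cc_def ennreal_mult'[symmetric] mult_ac jI(3))
    qed
    have incl: "E2 \<inter> C \<subseteq> \<sigma> -` E1 \<inter> space (PiM I D) \<inter> PiE I Bs"
    proof
      fix z assume z: "z \<in> E2 \<inter> C"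
      then have zsp: "z \<in> space ?P" and zF: "Fs q n h (\<lambda>i. s (z i)) (s (z j)) < \<tau> - c" and zC: "z \<in> C"
        by (auto simp: E2_def)
      have \<sigma>sp: "\<sigma> z \<in> space ?P"
        using zsp sw_in[OF jI(1,2)] by (auto simp: \<sigma>_def space_PiM PiE_iff)
      have \<sigma>n: "\<sigma> z (n+1) = z j" using jI by (simp add: \<sigma>_def sw_def)
      have wj: "wgt q n h j \<le> c"
      proof -
        have "grp_count n h (h j) > 0"
        proof -
          have "j \<in> {i\<in>{1..n}. h i = h j}" using j by simp
          then have "{i\<in>{1..n}. h i = h j} \<noteq> {}" by blast
          then show ?thesis unfolding grp_count_def by (simp add: card_gt_0_iff)
        qed
        then have "wgt q n h j \<in> {q k / real (grp_count n h k) | k. k \<in> {1..K} \<and> grp_count n h k > 0}"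
          using k by (auto simp: wgt_def k_def)
        then show ?thesis unfolding c_def cfun_def using cfun_fin by (intro Max_ge) auto
      qed
      have wj0: "wgt q n h j \<ge> 0" using wgt0[OF h] j by auto
      have "Fs q n h (\<lambda>i. s (\<sigma> z i)) (s (z j)) \<le> Fs q n h (\<lambda>i. s (z i)) (s (z j)) + wgt q n h j"
      proof -
        have r: "Fs q n h sc x = (if sc j < x then wgt q n h j else 0) + (\<Sum>i\<in>{1..n} - {j}. if sc i < x then wgt q n h i else 0)" for sc x
          unfolding Fs_def using j by (subst sum.remove[of _ j]) auto
        have "(\<Sum>i\<in>{1..n} - {j}. if s (\<sigma> z i) < s (z j) then wgt q n h i else 0)
            = (\<Sum>i\<in>{1..n} - {j}. if s (z i) < s (z j) then wgt q n h i else 0)"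
          by (rule sum.cong) (auto simp: \<sigma>_def sw_def I_def)
        then show ?thesis unfolding r using wj0 by simp
      qed
      then have "Fs q n h (\<lambda>i. s (\<sigma> z i)) (s (\<sigma> z (n+1))) < \<tau>" using zF wj \<sigma>n by simp
      then have "\<sigma> z \<in> E1" using \<sigma>sp by (simp add: E1_def)
      then show "z \<in> \<sigma> -` E1 \<inter> space (PiM I D) \<inter> PiE I Bs" using zsp zC spPD by (simp add: C_def)
    qed
    have "measure (PiM I D) (E2 \<inter> C) \<le> measure (PiM I D) (\<sigma> -` E1 \<inter> space (PiM I D) \<inter> PiE I Bs)"
    proof (rule finite_measure.finite_measure_mono)
      show "finite_measure (PiM I D)" using muP by (simp add: prob_space_def)
      show "E2 \<inter> C \<subseteq> \<sigma> -` E1 \<inter> space (PiM I D) \<inter> PiE I Bs" by (rule incl)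
      have \<sigma>m: "\<sigma> \<in> measurable (PiM I D) (PiM I D)"
        unfolding \<sigma>_def
      proof (rule measurable_restrict)
        fix i assume i: "i \<in> I"
        have "(\<lambda>z. z (sw j (n+1) i)) \<in> measurable (PiM I D) (D (sw j (n+1) i))"
          using sw_in[OF jI(1,2) i] by (rule measurable_component_singleton)
        then show "(\<lambda>z. z (sw j (n+1) i)) \<in> measurable (PiM I D) (D i)"
          using Dsets by (metis measurable_cong_sets)
      qed
      have "E1 \<in> sets (PiM I D)" using E1 sPD by simp
      then have "\<sigma> -` E1 \<inter> space (PiM I D) \<in> sets (PiM I D)" using \<sigma>m by (rule measurable_sets[rotated])
      moreover have "PiE I Bs \<in> sets (PiM I D)" using C sPD by (simp add: C_def)
      ultimately show "\<sigma> -` E1 \<inter> space (PiM I D) \<inter> PiE I Bs \<in> sets (PiM I D)" by (rule sets.Int)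
    qed
    also have "\<dots> = measure (PiM I D) (E1 \<inter> C)"
      using swap by (simp add: measure_def C_def)
    finally have "measure (PiM I D) (E2 \<inter> C) \<le> measure (PiM I D) (E1 \<inter> C)" .
    then show ?thesis
      using transfer[of "E1 \<inter> C"] transfer[of "E2 \<inter> C"] E1 E2 C t1 t2 by (simp add: c_def)
  qed
  have FsM: "(\<lambda>\<omega>. Fs q n h (\<lambda>i. s (Z i \<omega>)) (s (Z j \<omega>))) \<in> borel_measurable M" if j: "j \<in> I" for h j
    unfolding Fs_def
  proof (rule borel_measurable_sum)
    fix i assume "i \<in> {1..n}"
    then have i: "i \<in> I" by (auto simp: I_def)
    have [measurable]: "(\<lambda>\<omega>. s (Z i \<omega>)) \<in> borel_measurable M" "(\<lambda>\<omega>. s (Z j \<omega>)) \<in> borel_measurable M"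
      using Sm[OF i] Sm[OF j] .
    show "(\<lambda>\<omega>. if s (Z i \<omega>) < s (Z j \<omega>) then wgt q n h i else 0) \<in> borel_measurable M" by measurable
  qed
  have ChM: "Measurable.pred M (\<lambda>\<omega>. \<forall>i\<in>{1..n}. G i \<omega> = h i)" for h
  proof (rule pred_intros_finite)
    fix i assume "i \<in> {1..n}"
    then have [measurable]: "G i \<in> measurable M (count_space UNIV)" by (intro Gm) (auto simp: I_def)
    show "Measurable.pred M (\<lambda>\<omega>. G i \<omega> = h i)" by measurable
  qed simp
  have Gn[measurable]: "G (n+1) \<in> measurable M (count_space UNIV)" by (intro Gm) (auto simp: I_def)
  have Chev: "{\<omega>\<in>space M. \<forall>i\<in>{1..n}. G i \<omega> = h i} \<in> events" for h
    using ChM[of h] by measurable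
  have Psev: "{\<omega>\<in>space M. Fs q n h (\<lambda>i. s (Z i \<omega>)) (s (Z j \<omega>)) < t \<and> (\<forall>i\<in>{1..n}. G i \<omega> = h i)} \<in> events"
    if "j \<in> I" for h j t
    using FsM[OF that, of h] ChM[of h] by measurable
  have Qev: "{\<omega>\<in>space M. Fs q n h (\<lambda>i. s (Z i \<omega>)) (s (Z j \<omega>)) < t \<and> (\<forall>i\<in>{1..n}. G i \<omega> = h i) \<and> G (n+1) \<omega> = k} \<in> events"
    if "j \<in> I" for h j t k
    using FsM[OF that, of h] ChM[of h] by measurable
  have F1: "prob {\<omega>\<in>space M. (\<forall>i\<in>{1..n}. G i \<omega> = h i) \<and> G (n+1) \<omega> = k}
      = prob {\<omega>\<in>space M. \<forall>i\<in>{1..n}. G i \<omega> = h i} * q k"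
    if k: "k \<in> {1..K}" for h k
  proof -
    define X where "X = {z\<in>space (PiM {1..n} (\<lambda>_. L)). \<forall>i\<in>{1..n}. lab (z i) = h i}"
    define B where "B = {z\<in>space L. lab z = k}"
    have X: "X \<in> sets (PiM {1..n} (\<lambda>_. L))"
    proof -
      have [measurable]: "Measurable.pred (PiM {1..n} (\<lambda>_. L)) (\<lambda>z. \<forall>i\<in>{1..n}. lab (z i) = h i)"
        by (intro meas_lab lab_meas) auto
      show ?thesis unfolding X_def by measurable
    qed
    have B: "B \<in> sets L" unfolding B_def by measurable
    have Zn: "Z (n+1) \<omega> \<in> space L" if "\<omega> \<in> space M" for \<omega>
      using Zm[of "n+1"] that by (auto simp: I_def measurable_space)
    have e1: "{\<omega>\<in>space M. R \<omega> \<in> X \<and> Z (n+1) \<omega> \<in> B} = {\<omega>\<in>space M. (\<forall>i\<in>{1..n}. G i \<omega> = h i) \<and> G (n+1) \<omega> = k}"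
      using Rsp Zn by (auto simp: X_def B_def G_def R_def)
    have e2: "{\<omega>\<in>space M. R \<omega> \<in> X} = {\<omega>\<in>space M. \<forall>i\<in>{1..n}. G i \<omega> = h i}"
      using Rsp by (auto simp: X_def G_def R_def)
    have e3: "{\<omega>\<in>space M. Z (n+1) \<omega> \<in> B} = {\<omega>\<in>space M. G (n+1) \<omega> = k}"
      using Zn by (auto simp: B_def G_def)
    have "prob {\<omega>\<in>space M. G (n+1) \<omega> = k} = q k" using PG[of "n+1" k] k by (simp add: I_def cc_def)
    then show ?thesis using indep_test[OF X B] e1 e2 e3 by simp
  qed
  have PCh: "prob {\<omega>\<in>space M. \<forall>i\<in>{1..n}. G i \<omega> = h i} = (\<Prod>i\<in>{1..n}. p (h i))"
    if h: "h \<in> H" for h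
  proof (cases "n = 0")
    case True then show ?thesis by (simp add: prob_space)
  next
    case False
    have indG: "indep_vars (\<lambda>_. count_space UNIV) G {1..n}"
    proof -
      have "indep_vars (\<lambda>_. L) Z {1..n}" by (rule indep_vars_subset[OF Zind]) (auto simp: I_def)
      then have "indep_vars (\<lambda>_. count_space UNIV) (\<lambda>i x. lab (Z i x)) {1..n}"
        by (rule indep_vars_compose2) (rule lab_meas)
      then show ?thesis by (simp add: G_def[abs_def])
    qed
    have "prob (\<Inter>i\<in>{1..n}. G i -` {h i} \<inter> space M) = (\<Prod>i\<in>{1..n}. prob (G i -` {h i} \<inter> space M))"
      by (rule indep_varsD_finite[OF indG]) (use False in auto)
    moreover have "(\<Inter>i\<in>{1..n}. G i -` {h i} \<inter> space M) = {\<omega>\<in>space M. \<forall>i\<in>{1..n}. G i \<omega> = h i}"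
      using False by auto
    moreover have "prob (G i -` {h i} \<inter> space M) = p (h i)" if i: "i \<in> {1..n}" for i
    proof -
      have "G i -` {h i} \<inter> space M = {\<omega>\<in>space M. G i \<omega> = h i}" by auto
      moreover have "h i \<in> {1..K}" using h i by (auto simp: H_def PiE_iff)
      ultimately show ?thesis using PG[of i "h i"] i by (simp add: I_def cc_def)
    qed
    ultimately show ?thesis by simp
  qed
  define Lab where "Lab \<omega> = restrict (\<lambda>i. G i \<omega>) {1..n}" for \<omega>
  have Lab_eq: "Lab \<omega> = h \<longleftrightarrow> (\<forall>i\<in>{1..n}. G i \<omega> = h i)" if "h \<in> H" for \<omega> h
    unfolding Lab_def using that by (intro restrict_ext) (auto simp: H_def PiE_iff)
  have LabH: "AE \<omega> in M. Lab \<omega> \<in> H"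
    using AEgood by eventually_elim (auto simp: Lab_def H_def I_def PiE_iff)
  have EC_eq: "?EC = (\<Sum>h\<in>H. cfun K q n h * prob {\<omega>\<in>space M. \<forall>i\<in>{1..n}. G i \<omega> = h i})"
  proof -
    define A where "A = PiE {1..n} (\<lambda>_. UNIV :: nat set)"
    have cA: "countable A" unfolding A_def by (intro countable_PiE) auto
    have f1: "(\<lambda>\<omega>. Max (insert 0 {q k / real (grp_count n (\<lambda>i. fst (fst (Z i \<omega>))) k) | k.
                          k \<in> {1..K} \<and> grp_count n (\<lambda>i. fst (fst (Z i \<omega>))) k > 0}))
        = (\<lambda>\<omega>. cfun K q n (Lab \<omega>))"
    proof
      fix \<omega>
      have "cfun K q n (Lab \<omega>) = cfun K q n (\<lambda>i. G i \<omega>)" by (rule cfun_cong) (simp add: Lab_def)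
      then show "Max (insert 0 {q k / real (grp_count n (\<lambda>i. fst (fst (Z i \<omega>))) k) | k.
                          k \<in> {1..K} \<and> grp_count n (\<lambda>i. fst (fst (Z i \<omega>))) k > 0}) = cfun K q n (Lab \<omega>)"
        by (simp add: cfun_def G_def lab_def)
    qed
    have LabM: "Lab \<in> measurable M (count_space A)"
    proof (subst measurable_count_space_eq_countable[OF cA], intro conjI ballI)
      show "Lab \<in> space M \<rightarrow> A" by (auto simp: Lab_def A_def)
      fix a assume a: "a \<in> A"
      have "Lab -` {a} \<inter> space M = {\<omega>\<in>space M. \<forall>i\<in>{1..n}. G i \<omega> = a i}"
        using a by (auto simp: Lab_def A_def restrict_ext PiE_iff)
      then show "Lab -` {a} \<inter> space M \<in> sets M" using Chev by simp
    qed
    have m1: "(\<lambda>\<omega>. cfun K q n (Lab \<omega>)) \<in> borel_measurable M"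
      by (rule measurable_compose_countable'[where f="\<lambda>h \<omega>. cfun K q n h", OF _ LabM cA]) simp
    define g where "g \<omega> = (\<Sum>h\<in>H. cfun K q n h * indicator {\<omega>\<in>space M. \<forall>i\<in>{1..n}. G i \<omega> = h i} \<omega>)" for \<omega>
    have m2: "g \<in> borel_measurable M" unfolding g_def using Chev by measurable
    have ae: "AE \<omega> in M. cfun K q n (Lab \<omega>) = g \<omega>"
      using LabH AE_space
    proof eventually_elim
      case (elim \<omega>)
      have "g \<omega> = (\<Sum>h\<in>H. if h = Lab \<omega> then cfun K q n h else 0)"
        unfolding g_def
      proof (rule sum.cong[OF refl])
        fix h assume h: "h \<in> H"
        have "(\<omega> \<in> {\<omega>\<in>space M. \<forall>i\<in>{1..n}. G i \<omega> = h i}) = (h = Lab \<omega>)"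
          using Lab_eq[OF h, of \<omega>] elim(2) by auto
        then show "cfun K q n h * indicator {\<omega>\<in>space M. \<forall>i\<in>{1..n}. G i \<omega> = h i} \<omega>
            = (if h = Lab \<omega> then cfun K q n h else 0)" by (auto simp: indicator_def)
      qed
      also have "\<dots> = cfun K q n (Lab \<omega>)"
      proof -
        have "finite H" by (simp add: H_def finite_PiE)
        then show ?thesis using elim(1) by (simp add: sum.delta)
      qed
      finally show ?case by simp
    qed
    have "?EC = integral\<^sup>L M g" unfolding f1 by (rule integral_cong_AE[OF m1 m2 ae])
    also have "\<dots> = (\<Sum>h\<in>H. cfun K q n h * prob {\<omega>\<in>space M. \<forall>i\<in>{1..n}. G i \<omega> = h i})"
    proof -
      have int: "integrable M (\<lambda>\<omega>. cfun K q n h * indicator {\<omega>\<in>space M. \<forall>i\<in>{1..n}. G i \<omega> = h i} \<omega>)" for h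
        using Chev[of h] by (intro integrable_mult_right integrable_real_indicator) (auto simp: less_top[symmetric])
      have "integral\<^sup>L M g = (\<Sum>h\<in>H. integral\<^sup>L M (\<lambda>\<omega>. cfun K q n h * indicator {\<omega>\<in>space M. \<forall>i\<in>{1..n}. G i \<omega> = h i} \<omega>))"
        unfolding g_def by (rule Bochner_Integration.integral_sum[where f="\<lambda>h \<omega>. cfun K q n h * indicator {\<omega>\<in>space M. \<forall>i\<in>{1..n}. G i \<omega> = h i} \<omega>"]) (rule int)
      also have "\<dots> = (\<Sum>h\<in>H. cfun K q n h * prob {\<omega>\<in>space M. \<forall>i\<in>{1..n}. G i \<omega> = h i})"
        by (intro sum.cong refl) (simp add: Int_absorb2)
      finally show ?thesis .
    qed
    finally show ?thesis .
  qed
  define Chs where "Chs h = {\<omega>\<in>space M. \<forall>i\<in>{1..n}. G i \<omega> = h i}" for h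
  define Q where "Q h k = {\<omega>\<in>space M. Fs q n h (\<lambda>i. s (Z i \<omega>)) (s (Z (n+1) \<omega>)) < \<tau> \<and> (\<forall>i\<in>{1..n}. G i \<omega> = h i) \<and> G (n+1) \<omega> = k}" for h k
  have nI: "n+1 \<in> I" by (simp add: I_def)
  have cfun0: "cfun K q n h \<ge> 0" for h
    unfolding cfun_def using cfun_fin by (intro Max_ge) auto
  have tau1: "\<tau> \<le> 1" using alpha by (simp add: \<tau>_def)
  have perh: "(\<tau> - cfun K q n h) * prob (Chs h) \<le> (\<Sum>k\<in>{1..K}. prob (Q h k))" if h: "h \<in> H" for h
  proof -
    define c where "c = cfun K q n h"
    define W where "W = (\<Sum>i\<in>{1..n}. wgt q n h i)"
    have hK: "h i \<in> {1..K}" if "i \<in> {1..n}" for i using h that by (auto simp: H_def PiE_iff)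
    have c0: "c \<ge> 0" unfolding c_def by (rule cfun0)
    have pC0: "prob (Chs h) \<ge> 0" by simp
    show ?thesis
    proof (cases "W < \<tau>")
      case True
      have "Q h k = {\<omega>\<in>space M. (\<forall>i\<in>{1..n}. G i \<omega> = h i) \<and> G (n+1) \<omega> = k}" for k
      proof -
        have "Fs q n h (\<lambda>i. s (Z i \<omega>)) (s (Z (n+1) \<omega>)) < \<tau>" for \<omega>
          using Fs_le_W[OF wgt0[OF h]] True unfolding W_def by (rule le_less_trans)
        then show ?thesis by (auto simp: Q_def)
      qed
      then have "(\<Sum>k\<in>{1..K}. prob (Q h k)) = (\<Sum>k\<in>{1..K}. prob (Chs h) * q k)"
        using F1 by (simp add: Chs_def)
      also have "\<dots> = prob (Chs h)" using q_sum by (simp add: sum_distrib_left[symmetric])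
      finally have e: "(\<Sum>k\<in>{1..K}. prob (Q h k)) = prob (Chs h)" .
      have "(\<tau> - c) * prob (Chs h) \<le> 1 * prob (Chs h)"
        using c0 tau1 pC0 by (intro mult_right_mono) auto
      then show ?thesis using e by (simp add: c_def)
    next
      case False
      then have Wt: "\<tau> \<le> W" by simp
      define Ps where "Ps j = {\<omega>\<in>space M. Fs q n h (\<lambda>i. s (Z i \<omega>)) (s (Z j \<omega>)) < \<tau> - c \<and> (\<forall>i\<in>{1..n}. G i \<omega> = h i)}" for j
      have PsE: "Ps j \<in> events" if "j \<in> {1..n}" for j
        unfolding Ps_def using that by (intro Psev) (auto simp: I_def)
      have step1: "(\<Sum>j\<in>{j\<in>{1..n}. h j = k}. wgt q n h j * prob (Ps j)) \<le> prob (Q h k)" if k: "k \<in> {1..K}" for k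
      proof (cases "{j\<in>{1..n}. h j = k} = {}")
        case True then show ?thesis by (simp only: True sum.empty measure_nonneg)
      next
        case False
        define gc where "gc = real (grp_count n h k)"
        have gc: "gc = real (card {j\<in>{1..n}. h j = k})" by (simp add: gc_def grp_count_def)
        have gc0: "gc > 0" using False by (simp add: gc card_gt_0_iff)
        have "wgt q n h j * prob (Ps j) \<le> prob (Q h k) / gc" if j: "j \<in> {j\<in>{1..n}. h j = k}" for j
        proof -
          have j1: "j \<in> {1..n}" "h j = k" using j by auto
          have "wgt q n h j * prob (Ps j) = (prob (Ps j) * q k) / gc"
            using j1 by (simp add: wgt_def gc_def)
          also have "prob (Ps j) * q k = prob {\<omega>\<in>space M. Fs q n h (\<lambda>i. s (Z i \<omega>)) (s (Z j \<omega>)) < \<tau> - c \<and> (\<forall>i\<in>{1..n}. G i \<omega> = h i) \<and> G (n+1) \<omega> = k}"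
            unfolding Ps_def using F2[OF j1(1) k] by simp
          also have "\<dots> \<le> prob (Q h k)"
            using F3[OF h j1(1)] j1(2) by (simp add: Q_def c_def)
          finally show ?thesis using gc0 by (simp add: divide_right_mono)
        qed
        then have "(\<Sum>j\<in>{j\<in>{1..n}. h j = k}. wgt q n h j * prob (Ps j)) \<le> (\<Sum>j\<in>{j\<in>{1..n}. h j = k}. prob (Q h k) / gc)"
          by (intro sum_mono) auto
        also have "\<dots> = gc * (prob (Q h k) / gc)" unfolding gc by (rule sum_constant)
        also have "\<dots> = prob (Q h k)" using gc0 by simp
        finally show ?thesis .
      qed
      have step2: "(\<Sum>j\<in>{1..n}. wgt q n h j * prob (Ps j)) = (\<Sum>k\<in>{1..K}. \<Sum>j\<in>{j\<in>{1..n}. h j = k}. wgt q n h j * prob (Ps j))"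
      proof -
        have "(\<Sum>j\<in>{1..n}. wgt q n h j * prob (Ps j)) = (\<Sum>j\<in>{1..n}. \<Sum>k\<in>{1..K}. if h j = k then wgt q n h j * prob (Ps j) else 0)"
          using hK by (intro sum.cong refl) (simp add: sum.delta')
        also have "\<dots> = (\<Sum>k\<in>{1..K}. \<Sum>j\<in>{1..n}. if h j = k then wgt q n h j * prob (Ps j) else 0)"
          by (rule sum.swap)
        also have "\<dots> = (\<Sum>k\<in>{1..K}. \<Sum>j\<in>{j\<in>{1..n}. h j = k}. wgt q n h j * prob (Ps j))"
        proof (rule sum.cong[OF refl])
          fix k
          show "(\<Sum>j\<in>{1..n}. if h j = k then wgt q n h j * prob (Ps j) else 0) = (\<Sum>j\<in>{j\<in>{1..n}. h j = k}. wgt q n h j * prob (Ps j))"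
            by (rule sum.inter_filter[symmetric]) simp
        qed
        finally show ?thesis .
      qed
      have step3: "(\<tau> - c) * prob (Chs h) \<le> (\<Sum>j\<in>{1..n}. wgt q n h j * prob (Ps j))"
      proof (cases "\<tau> - c \<ge> 0")
        case False
        have "(\<tau> - c) * prob (Chs h) \<le> 0" using False pC0 by (simp add: mult_nonpos_nonneg)
        also have "0 \<le> (\<Sum>j\<in>{1..n}. wgt q n h j * prob (Ps j))"
          using wgt0[OF h] by (intro sum_nonneg) auto
        finally show ?thesis .
      next
        case True
        have ChE: "Chs h \<in> events" unfolding Chs_def by (rule Chev)
        have int1: "integrable M (\<lambda>\<omega>. (\<tau> - c) * indicator (Chs h) \<omega>)"
          using ChE by (intro integrable_mult_right integrable_real_indicator) (auto simp: less_top[symmetric])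
        have intj: "integrable M (\<lambda>\<omega>. wgt q n h j * indicator (Ps j) \<omega>)" if "j \<in> {1..n}" for j
          using PsE[OF that] by (intro integrable_mult_right integrable_real_indicator) (auto simp: less_top[symmetric])
        have "(\<tau> - c) * prob (Chs h) = integral\<^sup>L M (\<lambda>\<omega>. (\<tau> - c) * indicator (Chs h) \<omega>)"
          using ChE by (simp add: Int_absorb2)
        also have "\<dots> \<le> integral\<^sup>L M (\<lambda>\<omega>. \<Sum>j\<in>{1..n}. wgt q n h j * indicator (Ps j) \<omega>)"
        proof (rule integral_mono)
          show "integrable M (\<lambda>\<omega>. (\<tau> - c) * indicator (Chs h) \<omega>)" by (rule int1)
          show "integrable M (\<lambda>\<omega>. \<Sum>j\<in>{1..n}. wgt q n h j * indicator (Ps j) \<omega>)"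
            by (rule Bochner_Integration.integrable_sum[where f="\<lambda>j \<omega>. wgt q n h j * indicator (Ps j) \<omega>"]) (rule intj)
          fix \<omega> assume \<omega>: "\<omega> \<in> space M"
          show "(\<tau> - c) * indicator (Chs h) \<omega> \<le> (\<Sum>j\<in>{1..n}. wgt q n h j * indicator (Ps j) \<omega>)"
          proof (cases "\<omega> \<in> Chs h")
            case False
            then have "(\<tau> - c) * indicator (Chs h) \<omega> = 0" by simp
            also have "0 \<le> (\<Sum>j\<in>{1..n}. wgt q n h j * indicator (Ps j) \<omega>)"
              using wgt0[OF h] by (intro sum_nonneg) auto
            finally show ?thesis .
          next
            case True
            have "(\<Sum>j\<in>{1..n}. wgt q n h j * indicator (Ps j) \<omega>)
                = (\<Sum>j\<in>{1..n}. if (\<Sum>i\<in>{1..n}. if s (Z i \<omega>) < s (Z j \<omega>) then wgt q n h i else 0) < \<tau> - c then wgt q n h j else 0)"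
              using True \<omega> by (intro sum.cong refl) (auto simp: Ps_def Chs_def Fs_def indicator_def)
            moreover have "\<tau> - c \<le> \<dots>"
              by (rule key_comb) (use wgt0[OF h] Wt c0 in \<open>auto simp: W_def\<close>)
            ultimately show ?thesis using True by simp
          qed
        qed
        also have "\<dots> = (\<Sum>j\<in>{1..n}. wgt q n h j * prob (Ps j))"
        proof -
          have "integral\<^sup>L M (\<lambda>\<omega>. \<Sum>j\<in>{1..n}. wgt q n h j * indicator (Ps j) \<omega>)
              = (\<Sum>j\<in>{1..n}. integral\<^sup>L M (\<lambda>\<omega>. wgt q n h j * indicator (Ps j) \<omega>))"
            by (rule Bochner_Integration.integral_sum[where f="\<lambda>j \<omega>. wgt q n h j * indicator (Ps j) \<omega>"]) (rule intj)
          also have "\<dots> = (\<Sum>j\<in>{1..n}. wgt q n h j * prob (Ps j))"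
            using PsE by (intro sum.cong refl) (simp add: Int_absorb2)
          finally show ?thesis .
        qed
        finally show ?thesis .
      qed
      have "(\<Sum>k\<in>{1..K}. \<Sum>j\<in>{j\<in>{1..n}. h j = k}. wgt q n h j * prob (Ps j)) \<le> (\<Sum>k\<in>{1..K}. prob (Q h k))"
        by (intro sum_mono step1) auto
      then show ?thesis using step2 step3 by (simp add: c_def)
    qed
  qed
  define Cov where "Cov = {\<omega>\<in>space M. snd (Z (n+1) \<omega>) \<in> gwcp_set s K q \<alpha> n (\<lambda>i. Z i \<omega>) (fst (Z (n+1) \<omega>))}"
  have cov0: "\<omega> \<in> Cov \<longleftrightarrow> gwcp_mixture K q n (\<lambda>i. G i \<omega>) (\<lambda>i. s (Z i \<omega>)) {y. y < ereal (s (Z (n+1) \<omega>))} < \<tau>"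
    if "\<omega> \<in> space M" for \<omega>
  proof -
    have "\<omega> \<in> Cov \<longleftrightarrow> ereal (s (Z (n+1) \<omega>)) \<le> quantile (1 - \<alpha>) (gwcp_mixture K q n (\<lambda>i. G i \<omega>) (\<lambda>i. s (Z i \<omega>)))"
      using that by (simp add: Cov_def gwcp_set_def gwcp_qhat_def G_def lab_def)
    also have "\<dots> \<longleftrightarrow> gwcp_mixture K q n (\<lambda>i. G i \<omega>) (\<lambda>i. s (Z i \<omega>)) {y. y < ereal (s (Z (n+1) \<omega>))} < \<tau>"
      unfolding \<tau>_def by (rule cov_iff[OF q_nonneg])
    finally show ?thesis .
  qed
  define GC where "GC k \<omega> = (\<Sum>i\<in>{1..n}. if G i \<omega> = k then 1 else 0::real)" for k \<omega>
  define NUM where "NUM k \<omega> = (\<Sum>i\<in>{1..n}. if G i \<omega> = k \<and> s (Z i \<omega>) < s (Z (n+1) \<omega>) then 1 else 0::real)" for k \<omega>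
  have GCm[measurable]: "GC k \<in> borel_measurable M" for k
    unfolding GC_def
  proof (rule borel_measurable_sum)
    fix i assume "i \<in> {1..n}"
    then have [measurable]: "G i \<in> measurable M (count_space UNIV)" by (intro Gm) (auto simp: I_def)
    show "(\<lambda>\<omega>. if G i \<omega> = k then 1 else 0::real) \<in> borel_measurable M" by measurable
  qed
  have NUMm[measurable]: "NUM k \<in> borel_measurable M" for k
    unfolding NUM_def
  proof (rule borel_measurable_sum)
    fix i assume "i \<in> {1..n}"
    then have i: "i \<in> I" by (auto simp: I_def)
    have [measurable]: "G i \<in> measurable M (count_space UNIV)" by (rule Gm[OF i])
    have [measurable]: "(\<lambda>\<omega>. s (Z i \<omega>)) \<in> borel_measurable M" "(\<lambda>\<omega>. s (Z (n+1) \<omega>)) \<in> borel_measurable M"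
      using Sm[OF i] Sm[OF nI] .
    show "(\<lambda>\<omega>. if G i \<omega> = k \<and> s (Z i \<omega>) < s (Z (n+1) \<omega>) then 1 else 0::real) \<in> borel_measurable M" by measurable
  qed
  have Cov_eq: "Cov = {\<omega>\<in>space M. (\<Sum>k\<in>{1..K}. q k * (if 0 < GC k \<omega> then NUM k \<omega> / GC k \<omega> else 0)) < \<tau>}"
  proof -
    have "\<omega> \<in> Cov \<longleftrightarrow> (\<Sum>k\<in>{1..K}. q k * (if 0 < GC k \<omega> then NUM k \<omega> / GC k \<omega> else 0)) < \<tau>" if "\<omega> \<in> space M" for \<omega>
      unfolding cov0[OF that] mix_gen GC_def NUM_def ..
    moreover have "Cov \<subseteq> space M" by (auto simp: Cov_def)
    ultimately show ?thesis by blast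
  qed
  have CovE: "Cov \<in> events" unfolding Cov_eq by measurable
  have AEn1: "AE \<omega> in M. G (n+1) \<omega> \<in> {1..K}" using AEgood by eventually_elim (auto simp: I_def)
  have LabE: "{\<omega>\<in>space M. Lab \<omega> = h} = Chs h" if "h \<in> H" for h
    using Lab_eq[OF that] by (auto simp: Chs_def)
  have CQ: "Cov \<inter> {\<omega>\<in>space M. G (n+1) \<omega> = k} \<inter> {\<omega>\<in>space M. Lab \<omega> = h} = Q h k"
    if h: "h \<in> H" and k: "k \<in> {1..K}" for h k
  proof -
    have "\<omega> \<in> Cov \<longleftrightarrow> Fs q n h (\<lambda>i. s (Z i \<omega>)) (s (Z (n+1) \<omega>)) < \<tau>"
      if \<omega>: "\<omega> \<in> space M" and G: "\<forall>i\<in>{1..n}. G i \<omega> = h i" for \<omega>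
    proof -
      have "\<forall>i\<in>{1..n}. G i \<omega> \<in> {1..K}" using G h by (auto simp: H_def PiE_iff)
      then have "gwcp_mixture K q n (\<lambda>i. G i \<omega>) (\<lambda>i. s (Z i \<omega>)) {y. y < ereal (s (Z (n+1) \<omega>))}
          = Fs q n (\<lambda>i. G i \<omega>) (\<lambda>i. s (Z i \<omega>)) (s (Z (n+1) \<omega>))" by (rule mix_lt)
      also have "\<dots> = Fs q n h (\<lambda>i. s (Z i \<omega>)) (s (Z (n+1) \<omega>))" using G by (rule Fs_cong)
      finally show ?thesis using cov0[OF \<omega>] by simp
    qed
    moreover have "Cov \<subseteq> space M" by (auto simp: Cov_def)
    ultimately show ?thesis using Lab_eq[OF h] by (auto simp: Q_def)
  qed
  have "?cov = prob Cov" by (simp add: Cov_def)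
  also have "\<dots> = (\<Sum>k\<in>{1..K}. prob (Cov \<inter> {\<omega>\<in>space M. G (n+1) \<omega> = k}))"
    by (rule prob_decomp[OF _ CovE _ AEn1]) (use Gev[OF nI] in auto)
  also have "\<dots> = (\<Sum>k\<in>{1..K}. \<Sum>h\<in>H. prob (Q h k))"
  proof (rule sum.cong[OF refl])
    fix k assume k: "k \<in> {1..K}"
    have CkE: "Cov \<inter> {\<omega>\<in>space M. G (n+1) \<omega> = k} \<in> events" using CovE Gev[OF nI] by auto
    have "prob (Cov \<inter> {\<omega>\<in>space M. G (n+1) \<omega> = k})
        = (\<Sum>h\<in>H. prob (Cov \<inter> {\<omega>\<in>space M. G (n+1) \<omega> = k} \<inter> {\<omega>\<in>space M. Lab \<omega> = h}))"
    proof (rule prob_decomp[OF _ CkE _ LabH])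
      show "finite H" by (simp add: H_def finite_PiE)
      fix h assume "h \<in> H"
      then show "{\<omega>\<in>space M. Lab \<omega> = h} \<in> events" using LabE Chev by (simp add: Chs_def)
    qed
    also have "\<dots> = (\<Sum>h\<in>H. prob (Q h k))" using CQ k by simp
    finally show "prob (Cov \<inter> {\<omega>\<in>space M. G (n+1) \<omega> = k}) = (\<Sum>h\<in>H. prob (Q h k))" .
  qed
  also have "\<dots> = (\<Sum>h\<in>H. \<Sum>k\<in>{1..K}. prob (Q h k))" by (rule sum.swap)
  finally have covS: "?cov = (\<Sum>h\<in>H. \<Sum>k\<in>{1..K}. prob (Q h k))" .
  have "(\<Sum>h\<in>H. (\<tau> - cfun K q n h) * prob (Chs h)) \<le> (\<Sum>h\<in>H. \<Sum>k\<in>{1..K}. prob (Q h k))"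
    by (rule sum_mono) (rule perh)
  moreover have "(\<Sum>h\<in>H. (\<tau> - cfun K q n h) * prob (Chs h)) = \<tau> * (\<Sum>h\<in>H. prob (Chs h)) - (\<Sum>h\<in>H. cfun K q n h * prob (Chs h))"
    by (simp add: algebra_simps sum_subtractf sum_distrib_left)
  moreover have "(\<Sum>h\<in>H. prob (Chs h)) = 1"
  proof -
    have "(\<Sum>h\<in>H. prob (Chs h)) = (\<Sum>h\<in>H. \<Prod>i\<in>{1..n}. p (h i))"
      using PCh by (simp add: Chs_def)
    also have "\<dots> = 1" unfolding H_def by (rule sum_pi_one[OF p_sum])
    finally show ?thesis .
  qed
  ultimately show "?cov \<ge> 1 - \<alpha> - ?EC" using covS EC_eq by (simp add: \<tau>_def Chs_def)
  show "?EC = ?SUM" unfolding EC_eq H_def[symmetric] using PCh by (simp add: mult.commute)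
qed
theorem theorem2:
  fixes K n :: nat and p q :: "nat \<Rightarrow> real" and \<alpha> :: real
    and MX :: "'x measure" and MY :: "'y measure"
    and Pk :: "nat \<Rightarrow> ('x \<times> 'y) measure"
    and M :: "'o measure"
    and Z :: "nat \<Rightarrow> 'o \<Rightarrow> (nat \<times> 'x) \<times> 'y"
    and s :: "(nat \<times> 'x) \<times> 'y \<Rightarrow> real"
  assumes K: "K \<ge> 1"
    and p_nonneg: "\<forall>k\<in>{1..K}. p k \<ge> 0" and p_sum: "(\<Sum>k\<in>{1..K}. p k) = 1"
    and q_nonneg: "\<forall>k\<in>{1..K}. q k \<ge> 0" and q_sum: "(\<Sum>k\<in>{1..K}. q k) = 1"
    and Pi_prob: "\<forall>k\<in>{1..K}. prob_space (Pk k)"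
    and Pi_sets: "\<forall>k\<in>{1..K}. sets (Pk k) = sets (MX \<Otimes>\<^sub>M MY)"
    and alpha: "0 < \<alpha>" "\<alpha> < 1"
    and M: "prob_space M"
    and Z_meas: "\<forall>i\<in>{1..n+1}. Z i \<in> measurable M ((count_space UNIV \<Otimes>\<^sub>M MX) \<Otimes>\<^sub>M MY)"
    and Z_indep: "prob_space.indep_vars M (\<lambda>i. (count_space UNIV \<Otimes>\<^sub>M MX) \<Otimes>\<^sub>M MY) Z {1..n+1}"
    and Z_P: "\<forall>i\<in>{1..n}. \<forall>k\<in>{1..K}. \<forall>A\<in>sets (MX \<Otimes>\<^sub>M MY).
                measure M {\<omega>\<in>space M. fst (fst (Z i \<omega>)) = k \<and> (snd (fst (Z i \<omega>)), snd (Z i \<omega>)) \<in> A}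
                = p k * measure (Pk k) A"
    and Z_Q: "\<forall>k\<in>{1..K}. \<forall>A\<in>sets (MX \<Otimes>\<^sub>M MY).
                measure M {\<omega>\<in>space M. fst (fst (Z (n+1) \<omega>)) = k \<and> (snd (fst (Z (n+1) \<omega>)), snd (Z (n+1) \<omega>)) \<in> A}
                = q k * measure (Pk k) A"
    and s_meas: "s \<in> borel_measurable ((count_space UNIV \<Otimes>\<^sub>M MX) \<Otimes>\<^sub>M MY)"
  shows "measure M {\<omega>\<in>space M. snd (Z (n+1) \<omega>) \<in> gwcp_set s K q \<alpha> n (\<lambda>i. Z i \<omega>) (fst (Z (n+1) \<omega>))}
           \<ge> 1 - \<alpha> - prob_space.expectation M (\<lambda>\<omega>.
                 Max (insert 0 {q k / real (grp_count n (\<lambda>i. fst (fst (Z i \<omega>))) k) | k.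
                          k \<in> {1..K} \<and> grp_count n (\<lambda>i. fst (fst (Z i \<omega>))) k > 0}))
       \<and> (Min (p ` {1..K}) \<ge> 8 * ln (real n) / real n \<longrightarrow>
           measure M {\<omega>\<in>space M. snd (Z (n+1) \<omega>) \<in> gwcp_set s K q \<alpha> n (\<lambda>i. Z i \<omega>) (fst (Z (n+1) \<omega>))}
             \<ge> 1 - \<alpha> - 4 / real n * Max ((\<lambda>k. q k / p k) ` {1..K}))"
  proof -
  note main = main_setup[OF K p_nonneg p_sum q_nonneg q_sum Pi_prob Pi_sets alpha M Z_meas Z_indep Z_P Z_Q s_meas]
  show ?thesis
  proof (intro conjI impI)
    show "measure M {\<omega>\<in>space M. snd (Z (n+1) \<omega>) \<in> gwcp_set s K q \<alpha> n (\<lambda>i. Z i \<omega>) (fst (Z (n+1) \<omega>))}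
           \<ge> 1 - \<alpha> - prob_space.expectation M (\<lambda>\<omega>.
                 Max (insert 0 {q k / real (grp_count n (\<lambda>i. fst (fst (Z i \<omega>))) k) | k.
                          k \<in> {1..K} \<and> grp_count n (\<lambda>i. fst (fst (Z i \<omega>))) k > 0}))"
      by (rule main(1))
    assume cond: "Min (p ` {1..K}) \<ge> 8 * ln (real n) / real n"
    have "(\<Sum>h\<in>PiE {1..n} (\<lambda>_. {1..K}). (\<Prod>i\<in>{1..n}. p (h i)) * cfun K q n h)
           \<le> 4 / real n * Max ((\<lambda>k. q k / p k) ` {1..K})"
      by (rule part2_fin[OF K p_nonneg p_sum q_nonneg cond])
    then show "measure M {\<omega>\<in>space M. snd (Z (n+1) \<omega>) \<in> gwcp_set s K q \<alpha> n (\<lambda>i. Z i \<omega>) (fst (Z (n+1) \<omega>))}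
             \<ge> 1 - \<alpha> - 4 / real n * Max ((\<lambda>k. q k / p k) ` {1..K})"
      using main(1) main(2) by linarith
  qed
qed

end
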